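(* Let $d$ and $m$ be positive integers. Then $$\operatorname{CI}(W(d,m))=\operatorname{CI}(\operatorname{Sym}(d))\big(\operatorname{CI}^{(1)}(\operatorname{Hol}(\mathbb{Z}/m\mathbb{Z})),\dots,\operatorname{CI}^{(d)}(\operatorname{Hol}(\mathbb{Z}/m\mathbb{Z}))\big),$$ i.e. the polynomial $\operatorname{CI}(\operatorname{Sym}(d))\in\mathbb{Q}[x_1,\dots,x_d]$ evaluated at $x_j=\operatorname{CI}^{(j)}(\operatorname{Hol}(\mathbb{Z}/m\mathbb{Z}))$. In particular, if $q$ is a prime power with $d\mid q-1$, then $\operatorname{CI}(\operatorname{GCP}(d,q))$ is given by the same formula with $m=\frac{q-1}{d}$.
   Context: For a permutation $h$ of an $n$-element set, $\operatorname{CT}(h)=x_1^{k_1}\cdots x_n^{k_n}$ with $k_i$ the number of $i$-cycles; $\operatorname{CI}(G)=\frac1{|G|}\sum_{g\in G}\operatorname{CT}(g)$ for a finite permutation group $G$, and $\operatorname{CI}^{(j)}(G)$ is obtained from $\operatorname{CI}(G)$ by substituting $x_i\mapsto x_{ij}$ for all $i$. $\operatorname{Hol}(\mathbb{Z}/m\mathbb{Z})$ is the permutation group on $\mathbb{Z}/m\mathbb{Z}$ of maps $\lambda(a,b):x\mapsto ax+b$, $a$ a unit. $\operatorname{Sym}(d)$ is the symmetric group on $\{0,\dots,d-1\}$. $W(d,m)=\operatorname{Hol}(\mathbb{Z}/m\mathbb{Z})\wr_{\mathrm{imp}}\operatorname{Sym}(d)$, the permutation group on $\mathbb{Z}/m\mathbb{Z}\times\{0,\dots,d-1\}$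 of pairs $(\sigma,(g_0,\dots,g_{d-1}))$ ($\sigma\in\operatorname{Sym}(d)$, $g_i\in\operatorname{Hol}(\mathbb{Z}/m\mathbb{Z})$) acting by $(x,i)\mapsto(g_{\sigma(i)}(x),\sigma(i))$. $\operatorname{GCP}(d,q)$ is the permutation group on $\mathbb{F}_q^{\ast}$ of restrictions of those maps $\mathbb{F}_q\to\mathbb{F}_q$ that are permutations and are of the form $0\mapsto0$, $x\mapsto a_ix^{r_i}$ for $x\in\omega^iC$ ($i=0,\dots,d-1$), where $\omega$ is a primitive root, $C$ the index $d$ subgroup of $\mathbb{F}_q^{\ast}$, $a_i\in\mathbb{F}_q$, $r_i\in\{1,\dots,\frac{q-1}{d}\}$. *)

theory Defs
  imports Complex_Main "HOL-Library.Poly_Mapping" "HOL-Combinatorics.Permutations" "HOL-Computational_Algebra.Primes"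
begin

type_synonym mpoly = "(nat \<Rightarrow>\<^sub>0 nat) \<Rightarrow>\<^sub>0 rat"

definition var :: "nat \<Rightarrow> mpoly" where
  "var i = Poly_Mapping.single (Poly_Mapping.single i 1) 1"

definition const :: "rat \<Rightarrow> mpoly" where
  "const c = Poly_Mapping.single 0 c"

definition monom_eval :: "(nat \<Rightarrow>\<^sub>0 nat) \<Rightarrow> (nat \<Rightarrow> mpoly) \<Rightarrow> mpoly" where
  "monom_eval e Q = (\<Prod>i\<in>Poly_Mapping.keys e. Q i ^ Poly_Mapping.lookup e i)"

definition subst :: "mpoly \<Rightarrow> (nat \<Rightarrow> mpoly) \<Rightarrow> mpoly" where
  "subst P Q = (\<Sum>e\<in>Poly_Mapping.keys P. const (Poly_Mapping.lookup P e) * monom_eval e Q)"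

definition CI_pow :: "nat \<Rightarrow> mpoly \<Rightarrow> mpoly" where
  "CI_pow j P = subst P (\<lambda>i. var (i * j))"

definition orbit_of :: "('a \<Rightarrow> 'a) \<Rightarrow> 'a \<Rightarrow> 'a set" where
  "orbit_of h x = range (\<lambda>k. (h ^^ k) x)"

definition ncycles :: "'a set \<Rightarrow> ('a \<Rightarrow> 'a) \<Rightarrow> nat \<Rightarrow> nat" where
  "ncycles S h i = card {orbit_of h x | x. x \<in> S \<and> card (orbit_of h x) = i}"

definition CT :: "'a set \<Rightarrow> ('a \<Rightarrow> 'a) \<Rightarrow> mpoly" where
  "CT S h = (\<Prod>i\<in>{1..card S}. var i ^ ncycles S h i)"

text \<open>Cycle index of a finite permutation group G on S (elements given as
  functions which are the identity outside S).\<close>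
definition CI :: "'a set \<Rightarrow> ('a \<Rightarrow> 'a) set \<Rightarrow> mpoly" where
  "CI S G = const (1 / of_nat (card G)) * (\<Sum>g\<in>G. CT S g)"

definition Sym :: "nat \<Rightarrow> (nat \<Rightarrow> nat) set" where
  "Sym d = {\<sigma>. \<sigma> permutes {0..<d}}"

definition hol_map :: "nat \<Rightarrow> nat \<Rightarrow> nat \<Rightarrow> nat \<Rightarrow> nat" where
  "hol_map m a b = (\<lambda>x. if x < m then (a * x + b) mod m else x)"

definition Hol :: "nat \<Rightarrow> (nat \<Rightarrow> nat) set" where
  "Hol m = {hol_map m a b | a b. a < m \<and> b < m \<and> coprime a m}"

definition W_carrier :: "nat \<Rightarrow> nat \<Rightarrow> (nat \<times> nat) set" where
  "W_carrier d m = {0..<m} \<times> {0..<d}"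

definition W :: "nat \<Rightarrow> nat \<Rightarrow> (nat \<times> nat \<Rightarrow> nat \<times> nat) set" where
  "W d m = {(\<lambda>(x, i). if (x, i) \<in> W_carrier d m then (g (\<sigma> i) x, \<sigma> i) else (x, i))
            | \<sigma> g. \<sigma> \<in> Sym d \<and> (\<forall>j<d. g j \<in> Hol m)}"

definition primitive_root :: "'a::{finite,field} \<Rightarrow> bool" where
  "primitive_root \<omega> \<longleftrightarrow> \<omega> \<noteq> 0 \<and> (\<forall>x. x \<noteq> 0 \<longrightarrow> (\<exists>k::nat. x = \<omega> ^ k))"

text \<open>The subgroup of index d of F_q^* (for d dividing q-1): the d-th powers.\<close>
definition index_subgroup :: "nat \<Rightarrow> 'a::{finite,field} set" where
  "index_subgroup d = {x ^ d | x. x \<noteq> 0}"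

definition GCP :: "nat \<Rightarrow> 'a::{finite,field} \<Rightarrow> ('a \<Rightarrow> 'a) set" where
  "GCP d \<omega> = {f. bij f \<and> f 0 = 0 \<and>
     (\<exists>a r. (\<forall>i<d. r i \<in> {1..(card (UNIV :: 'a set) - 1) div d}) \<and>
            (\<forall>i<d. \<forall>c\<in>index_subgroup d. f (\<omega> ^ i * c) = a i * (\<omega> ^ i * c) ^ r i))}"

end

theory Submission
  imports Defs
begin


lemma const_add: "const (a + b) = const a + const b"
  by (simp add: const_def single_add)
lemma const_mult: "const (a * b) = const a * const b"
  by (simp add: const_def mult_single)
lemma const_0[simp]: "const 0 = 0" by (simp add: const_def)
lemma const_1[simp]: "const 1 = 1" by (simp add: const_def)
lemma const_of_nat: "const (of_nat n) = of_nat n"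
  by (simp add: const_def)
lemma const_sum: "const (sum f A) = (\<Sum>x\<in>A. const (f x))"
  by (induction A rule: infinite_finite_induct) (auto simp: const_add)
lemma const_prod: "const (prod f A) = (\<Prod>x\<in>A. const (f x))"
  by (induction A rule: infinite_finite_induct) (auto simp: const_mult)
lemma const_power: "const (a ^ n) = const a ^ n"
  by (induction n) (auto simp: const_mult)

lemma monom_eval_superset:
  assumes "finite K" "Poly_Mapping.keys e \<subseteq> K"
  shows "monom_eval e Q = (\<Prod>i\<in>K. Q i ^ Poly_Mapping.lookup e i)"
  unfolding monom_eval_def
  by (rule prod.mono_neutral_left) (use assms in \<open>auto simp: in_keys_iff\<close>)

lemma monom_eval_add: "monom_eval (a + b) Q = monom_eval a Q * monom_eval b Q"
proof -
  let ?K = "Poly_Mapping.keys a \<union> Poly_Mapping.keys b"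
  have "monom_eval (a + b) Q = (\<Prod>i\<in>?K. Q i ^ Poly_Mapping.lookup (a+b) i)"
    by (rule monom_eval_superset) (auto simp: keys_add)
  also have "\<dots> = (\<Prod>i\<in>?K. Q i ^ Poly_Mapping.lookup a i) * (\<Prod>i\<in>?K. Q i ^ Poly_Mapping.lookup b i)"
    by (simp add: lookup_add power_add prod.distrib)
  also have "\<dots> = monom_eval a Q * monom_eval b Q"
    by (subst (1 2) monom_eval_superset[where K="?K"]) auto
  finally show ?thesis .
qed

lemma monom_eval_zero[simp]: "monom_eval 0 Q = 1"
  by (simp add: monom_eval_def)

lemma monom_eval_single: "monom_eval (Poly_Mapping.single i n) Q = Q i ^ n"
  by (cases "n = 0") (auto simp: monom_eval_def)

lemma subst_superset:
  assumes "finite K" "Poly_Mapping.keys P \<subseteq> K"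
  shows "subst P Q = (\<Sum>e\<in>K. const (Poly_Mapping.lookup P e) * monom_eval e Q)"
  unfolding subst_def
  by (rule sum.mono_neutral_left) (use assms in \<open>auto simp: in_keys_iff\<close>)

lemma subst_add: "subst (P + R) Q = subst P Q + subst R Q"
proof -
  let ?K = "Poly_Mapping.keys P \<union> Poly_Mapping.keys R"
  have "subst (P + R) Q = (\<Sum>e\<in>?K. const (Poly_Mapping.lookup (P+R) e) * monom_eval e Q)"
    by (rule subst_superset) (auto simp: keys_add)
  also have "\<dots> = (\<Sum>e\<in>?K. const (Poly_Mapping.lookup P e) * monom_eval e Q) + (\<Sum>e\<in>?K. const (Poly_Mapping.lookup R e) * monom_eval e Q)"
    by (simp add: lookup_add const_add distrib_right sum.distrib)
  also have "\<dots> = subst P Q + subst R Q"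
    by (subst (1 2) subst_superset[where K="?K"]) auto
  finally show ?thesis .
qed

lemma subst_0[simp]: "subst 0 Q = 0" by (simp add: subst_def)

lemma subst_sum: "subst (sum f A) Q = (\<Sum>x\<in>A. subst (f x) Q)"
  by (induction A rule: infinite_finite_induct) (auto simp: subst_add)

lemma subst_single: "subst (Poly_Mapping.single e c) Q = const c * monom_eval e Q"
  by (cases "c = 0") (auto simp: subst_def)

lemma poly_expand: "(P::mpoly) = (\<Sum>e\<in>Poly_Mapping.keys P. Poly_Mapping.single e (Poly_Mapping.lookup P e))"
  by (rule poly_mapping_eqI) (auto simp: lookup_sum lookup_single when_def in_keys_iff
      intro: sum.neutral)

lemma subst_mult: "subst (P * R) Q = subst P Q * subst R Q"
proof -
  have "P * R = (\<Sum>a\<in>Poly_Mapping.keys P. \<Sum>b\<in>Poly_Mapping.keys R.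
           Poly_Mapping.single (a+b) (Poly_Mapping.lookup P a * Poly_Mapping.lookup R b))"
    apply (subst poly_expand[of P], subst poly_expand[of R])
    by (simp add: sum_distrib_left sum_distrib_right mult_single sum.swap[of _ "Poly_Mapping.keys R"])
  hence "subst (P * R) Q = (\<Sum>a\<in>Poly_Mapping.keys P. \<Sum>b\<in>Poly_Mapping.keys R.
       (const (Poly_Mapping.lookup P a) * monom_eval a Q) * (const (Poly_Mapping.lookup R b) * monom_eval b Q))"
    by (simp add: subst_sum subst_single const_mult monom_eval_add mult_ac)
  also have "\<dots> = subst P Q * subst R Q"
    by (simp add: subst_def sum_distrib_left sum_distrib_right sum.swap[of _ "Poly_Mapping.keys R"])
  finally show ?thesis .
qed

lemma subst_const[simp]: "subst (const c) Q = const c"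
  by (simp add: const_def subst_single)
lemma subst_1[simp]: "subst 1 Q = 1"
  using subst_const[of 1 Q] by simp
lemma subst_var[simp]: "subst (var i) Q = Q i"
  by (simp add: var_def subst_single monom_eval_single)
lemma subst_prod: "subst (prod f A) Q = (\<Prod>x\<in>A. subst (f x) Q)"
  by (induction A rule: infinite_finite_induct) (auto simp: subst_mult)
lemma subst_power: "subst (P ^ n) Q = subst P Q ^ n"
  by (induction n) (auto simp: subst_mult)
lemma subst_of_nat[simp]: "subst (of_nat n) Q = of_nat n"
  using subst_const[of "of_nat n" Q] by (simp add: const_of_nat)

lemma CI_pow_sum: "CI_pow j (sum f A) = (\<Sum>x\<in>A. CI_pow j (f x))"
  by (simp add: CI_pow_def subst_sum)
lemma CI_pow_mult: "CI_pow j (P * R) = CI_pow j P * CI_pow j R"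
  by (simp add: CI_pow_def subst_mult)
lemma CI_pow_const[simp]: "CI_pow j (const c) = const c"
  by (simp add: CI_pow_def)
lemma CI_pow_CT: "CI_pow j (CT S h) = (\<Prod>i\<in>{1..card S}. var (i * j) ^ ncycles S h i)"
  by (simp add: CI_pow_def CT_def subst_prod subst_power)

lemma subst_CT: "subst (CT S h) Q = (\<Prod>i\<in>{1..card S}. Q i ^ ncycles S h i)"
  by (simp add: CT_def subst_prod subst_power)

lemma const_inv_of_nat: "n > 0 \<Longrightarrow> const (1 / of_nat n) * of_nat n = 1"
  by (simp flip: const_of_nat const_mult)



locale perm_on =
  fixes S :: "'a set" and h :: "'a \<Rightarrow> 'a"
  assumes fin: "finite S" and maps: "\<And>x. x \<in> S \<Longrightarrow> h x \<in> S" and inj: "inj_on h S"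
begin

lemma funpow_in: "x \<in> S \<Longrightarrow> (h ^^ n) x \<in> S"
  by (induction n) (auto simp: maps)

lemma funpow_cancel: "x \<in> S \<Longrightarrow> y \<in> S \<Longrightarrow> (h ^^ n) x = (h ^^ n) y \<Longrightarrow> x = y"
  by (induction n) (auto dest: inj_onD[OF inj] simp: funpow_in)

lemma orbit_subset: "x \<in> S \<Longrightarrow> orbit_of h x \<subseteq> S"
  by (auto simp: orbit_of_def funpow_in)

lemma in_orbit: "x \<in> orbit_of h x"
  unfolding orbit_of_def by (metis funpow_0 rangeI)

lemma orbit_finite: "x \<in> S \<Longrightarrow> finite (orbit_of h x)"
  using orbit_subset fin finite_subset by blast

lemma funpow_comb: "(h ^^ n) ((h ^^ k) x) = (h ^^ (n + k)) x"
  by (simp add: funpow_add)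

lemma cancel_shift: assumes "x \<in> S" "i < j" "(h ^^ i) x = (h ^^ j) x" shows "(h ^^ (j - i)) x = x"
proof -
  have "(h ^^ j) x = (h ^^ i) ((h ^^ (j - i)) x)" using assms(2) by (simp add: funpow_comb)
  hence "(h ^^ i) ((h ^^ (j - i)) x) = (h ^^ i) x" using assms(3) by simp
  thus ?thesis using funpow_cancel assms(1) funpow_in by blast
qed

lemma exists_period: assumes "x \<in> S" shows "\<exists>p>0. (h ^^ p) x = x"
proof -
  have "\<not> inj_on (\<lambda>n. (h ^^ n) x) {0..card S}"
  proof
    assume i: "inj_on (\<lambda>n. (h ^^ n) x) {0..card S}"
    have "(\<lambda>n. (h ^^ n) x) ` {0..card S} \<subseteq> S" using assms funpow_in by auto
    from card_mono[OF fin this] card_image[OF i] show False by simp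
  qed
  then obtain i j where ij: "i \<noteq> j" "(h ^^ i) x = (h ^^ j) x"
    unfolding inj_on_def by auto
  show ?thesis
  proof (cases "i < j")
    case True thus ?thesis using cancel_shift[OF assms True ij(2)] by (intro exI[of _ "j - i"]) auto
  next
    case False hence "j < i" using ij by simp
    thus ?thesis using cancel_shift[OF assms _ ij(2)[symmetric]] by (intro exI[of _ "i - j"]) auto
  qed
qed

definition per :: "'a \<Rightarrow> nat" where "per x = (LEAST p. p > 0 \<and> (h ^^ p) x = x)"

lemma per: assumes "x \<in> S" shows "per x > 0" "(h ^^ per x) x = x"
  using LeastI_ex[OF exists_period[OF assms]] unfolding per_def by auto

lemma per_min: "0 < q \<Longrightarrow> q < per x \<Longrightarrow> (h ^^ q) x \<noteq> x"
  unfolding per_def using not_less_Least by blast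

lemma funpow_mod: assumes "x \<in> S" shows "(h ^^ n) x = (h ^^ (n mod per x)) x"
proof -
  have "\<And>k. (h ^^ (per x * k)) x = x"
  proof -
    fix k show "(h ^^ (per x * k)) x = x"
      by (induction k) (auto simp: funpow_add per(2)[OF assms] simp del: funpow.simps)
  qed
  moreover have "n = n mod per x + per x * (n div per x)" by simp
  ultimately show ?thesis by (metis comp_apply funpow_add)
qed

lemma inj_below_per: assumes "x \<in> S" shows "inj_on (\<lambda>n. (h ^^ n) x) {0..<per x}"
proof (rule inj_onI)
  have *: False if ij: "i < j" "j < per x" "(h ^^ i) x = (h ^^ j) x" for i j
  proof -
    have "(h ^^ (j - i)) x = x" using cancel_shift assms ij by blast
    moreover have "j - i < per x" "0 < j - i" using ij by auto
    ultimately show False using per_min by blast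
  qed
  fix i j assume "i \<in> {0..<per x}" "j \<in> {0..<per x}" "(h ^^ i) x = (h ^^ j) x"
  thus "i = j" using *[of i j] *[of j i] by (cases "i < j"; cases "j < i") auto
qed

lemma orbit_eq_image: assumes "x \<in> S" shows "orbit_of h x = (\<lambda>n. (h ^^ n) x) ` {0..<per x}"
proof -
  have "orbit_of h x \<subseteq> (\<lambda>n. (h ^^ n) x) ` {0..<per x}"
  proof
    fix y assume "y \<in> orbit_of h x"
    then obtain k where "y = (h ^^ k) x" unfolding orbit_of_def by auto
    hence "y = (h ^^ (k mod per x)) x" using funpow_mod[OF assms] by simp
    moreover have "k mod per x \<in> {0..<per x}" using per(1)[OF assms] by simp
    ultimately show "y \<in> (\<lambda>n. (h ^^ n) x) ` {0..<per x}" by blast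
  qed
  thus ?thesis unfolding orbit_of_def by auto
qed

lemma card_orbit: assumes "x \<in> S" shows "card (orbit_of h x) = per x"
  using card_image[OF inj_below_per[OF assms]] orbit_eq_image[OF assms] by simp

lemma funpow_eq_iff: assumes "x \<in> S"
  shows "(h ^^ n) x = x \<longleftrightarrow> card (orbit_of h x) dvd n"
proof -
  have "(h ^^ n) x = x \<longleftrightarrow> (h ^^ (n mod per x)) x = (h ^^ 0) x"
    using funpow_mod[OF assms] by simp
  also have "\<dots> \<longleftrightarrow> n mod per x = 0"
    using inj_onD[OF inj_below_per[OF assms]] per(1)[OF assms] by force
  finally show ?thesis using card_orbit[OF assms] by (simp add: dvd_eq_mod_eq_0)
qed

lemma orbit_same: assumes "x \<in> S" "y \<in> orbit_of h x" shows "orbit_of h y = orbit_of h x"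
proof -
  obtain k where k: "y = (h ^^ k) x" using assms(2) unfolding orbit_of_def by auto
  have sub: "orbit_of h y \<subseteq> orbit_of h x"
    unfolding orbit_of_def k funpow_comb by auto
  have "(h ^^ (per x * k - k)) y = x"
  proof -
    have "(h ^^ (per x * k - k)) y = (h ^^ (per x * k - k + k)) x"
      by (simp add: k funpow_comb)
    also have "per x * k - k + k = per x * k" using per(1)[OF assms(1)] by (simp add: mult_le_mono1)
    also have "(h ^^ (per x * k)) x = x" using funpow_mod[OF assms(1), of "per x * k"] by simp
    finally show ?thesis .
  qed
  hence "x \<in> orbit_of h y" unfolding orbit_of_def by (metis rangeI)
  then obtain j where j: "x = (h ^^ j) y" unfolding orbit_of_def by auto
  have "orbit_of h x \<subseteq> orbit_of h y"
    unfolding orbit_of_def j funpow_comb by auto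
  with sub show ?thesis by auto
qed

lemma orbit_same': "x \<in> S \<Longrightarrow> orbit_of h ((h ^^ n) x) = orbit_of h x"
  by (rule orbit_same) (auto simp: orbit_of_def)

lemma ncycles_mult:
  assumes "i > 0"
  shows "ncycles S h i * i = card {x \<in> S. card (orbit_of h x) = i}"
proof -
  define Orbs where "Orbs = {orbit_of h x | x. x \<in> S \<and> card (orbit_of h x) = i}"
  have U: "{x \<in> S. card (orbit_of h x) = i} = \<Union> Orbs"
  proof
    show "{x \<in> S. card (orbit_of h x) = i} \<subseteq> \<Union> Orbs"
    proof
      fix x assume "x \<in> {x \<in> S. card (orbit_of h x) = i}"
      thus "x \<in> \<Union> Orbs" unfolding Orbs_def using in_orbit[of x] by blast
    qed
    show "\<Union> Orbs \<subseteq> {x \<in> S. card (orbit_of h x) = i}"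
    proof
      fix z assume "z \<in> \<Union> Orbs"
      then obtain x where x: "x \<in> S" "card (orbit_of h x) = i" "z \<in> orbit_of h x" unfolding Orbs_def by blast
      have "z \<in> S" using orbit_subset[OF x(1)] x(3) by blast
      moreover have "orbit_of h z = orbit_of h x" using orbit_same[OF x(1) x(3)] .
      ultimately show "z \<in> {x \<in> S. card (orbit_of h x) = i}" using x by simp
    qed
  qed
  have fO: "finite Orbs"
  proof -
    have "Orbs \<subseteq> orbit_of h ` S" unfolding Orbs_def by blast
    thus ?thesis using fin finite_subset by blast
  qed
  have "card (\<Union> Orbs) = (\<Sum>A\<in>Orbs. card A)"
  proof (rule card_Union_disjoint)
    show "pairwise disjnt Orbs"
      unfolding pairwise_def disjnt_def
    proof (intro ballI impI)
      fix A B assume AB: "A \<in> Orbs" "B \<in> Orbs" "A \<noteq> B"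
      obtain x where x: "x \<in> S" "A = orbit_of h x" using AB(1) unfolding Orbs_def by blast
      obtain y where y: "y \<in> S" "B = orbit_of h y" using AB(2) unfolding Orbs_def by blast
      note xy = x(1) y(1) x(2) y(2)
      show "A \<inter> B = {}"
      proof (rule ccontr)
        assume "A \<inter> B \<noteq> {}"
        then obtain z where z: "z \<in> orbit_of h x" "z \<in> orbit_of h y" using xy by blast
        have "orbit_of h x = orbit_of h y" using orbit_same[OF xy(1) z(1)] orbit_same[OF xy(2) z(2)] by (rule trans[OF sym])
        thus False using AB xy by simp
      qed
    qed
    show "finite A" if A: "A \<in> Orbs" for A
    proof -
      obtain x where x: "x \<in> S" "A = orbit_of h x" using A unfolding Orbs_def by blast
      thus ?thesis using orbit_finite by simp
    qed
  qed
  also have "\<dots> = (\<Sum>A\<in>Orbs. i)" by (rule sum.cong) (auto simp: Orbs_def)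
  also have "\<dots> = card Orbs * i" by simp
  finally have "card Orbs * i = card {x \<in> S. card (orbit_of h x) = i}" using U by simp
  thus ?thesis unfolding ncycles_def Orbs_def .
qed

lemma ncycles_big: assumes "i > card S" shows "ncycles S h i = 0"
proof -
  have "card (orbit_of h x) \<le> card S" if "x \<in> S" for x
    using card_mono[OF fin orbit_subset[OF that]] .
  hence "{orbit_of h x | x. x \<in> S \<and> card (orbit_of h x) = i} = {}"
    using assms by (auto simp: not_le[symmetric])
  thus ?thesis unfolding ncycles_def by (metis card.empty)
qed

lemma CT_superset: assumes "card S \<le> N" shows "CT S h = (\<Prod>i\<in>{1..N}. var i ^ ncycles S h i)"
  unfolding CT_def
proof (rule prod.mono_neutral_left)
  show "\<forall>i\<in>{1..N} - {1..card S}. var i ^ ncycles S h i = 1"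
  proof
    fix i assume "i \<in> {1..N} - {1..card S}"
    hence "i > card S" by auto
    thus "var i ^ ncycles S h i = 1" using ncycles_big by simp
  qed
qed (use assms in auto)

end

lemma ncycles_conj:
  assumes "perm_on S h" "bij_betw \<phi> S T" "\<And>x. x \<in> S \<Longrightarrow> \<phi> (h x) = h' (\<phi> x)"
  shows "ncycles T h' i = ncycles S h i"
proof -
  interpret perm_on S h by fact
  have pw: "\<phi> ((h ^^ n) x) = (h' ^^ n) (\<phi> x)" if "x \<in> S" for x n
    using that by (induction n) (auto simp: assms(3) funpow_in)
  have orb: "orbit_of h' (\<phi> x) = \<phi> ` orbit_of h x" if "x \<in> S" for x
    unfolding orbit_of_def image_image by (simp add: pw[OF that])
  have inj\<phi>: "inj_on \<phi> S" using assms(2) bij_betw_def by blast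
  have cardorb: "card (orbit_of h' (\<phi> x)) = card (orbit_of h x)" if "x \<in> S" for x
    unfolding orb[OF that] by (rule card_image[OF inj_on_subset[OF inj\<phi> orbit_subset[OF that]]])
  have T: "T = \<phi> ` S" using assms(2) by (simp add: bij_betw_def)
  define OS where "OS = {orbit_of h x | x. x \<in> S \<and> card (orbit_of h x) = i}"
  have eq: "{orbit_of h' y | y. y \<in> T \<and> card (orbit_of h' y) = i} = image \<phi> ` OS"
  proof
    show "{orbit_of h' y | y. y \<in> T \<and> card (orbit_of h' y) = i} \<subseteq> image \<phi> ` OS"
    proof
      fix A assume "A \<in> {orbit_of h' y | y. y \<in> T \<and> card (orbit_of h' y) = i}"
      then obtain y where y: "y \<in> T" "card (orbit_of h' y) = i" "A = orbit_of h' y" by blast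
      then obtain x where x: "x \<in> S" "y = \<phi> x" using T by blast
      have "A = \<phi> ` orbit_of h x" using y(3) x orb by simp
      moreover have "orbit_of h x \<in> OS" unfolding OS_def using x cardorb[OF x(1)] y(2) by auto
      ultimately show "A \<in> image \<phi> ` OS" by blast
    qed
    show "image \<phi> ` OS \<subseteq> {orbit_of h' y | y. y \<in> T \<and> card (orbit_of h' y) = i}"
    proof
      fix A assume "A \<in> image \<phi> ` OS"
      then obtain x where x: "x \<in> S" "card (orbit_of h x) = i" "A = \<phi> ` orbit_of h x"
        unfolding OS_def by blast
      have "A = orbit_of h' (\<phi> x)" using x orb by simp
      moreover have "\<phi> x \<in> T" using T x by blast
      moreover have "card (orbit_of h' (\<phi> x)) = i" using cardorb[OF x(1)] x(2) by simp
      ultimately show "A \<in> {orbit_of h' y | y. y \<in> T \<and> card (orbit_of h' y) = i}" by blast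
    qed
  qed
  have "inj_on (image \<phi>) OS"
  proof (rule inj_on_image)
    have "\<Union>OS \<subseteq> S" unfolding OS_def using orbit_subset by blast
    thus "inj_on \<phi> (\<Union> OS)" using inj\<phi> inj_on_subset by blast
  qed
  hence "card (image \<phi> ` OS) = card OS" by (rule card_image)
  thus ?thesis unfolding ncycles_def eq OS_def .
qed

lemma CT_conj:
  assumes "perm_on S h" "bij_betw \<phi> S T" "\<And>x. x \<in> S \<Longrightarrow> \<phi> (h x) = h' (\<phi> x)"
  shows "CT T h' = CT S h"
  unfolding CT_def using ncycles_conj[OF assms] bij_betw_same_card[OF assms(2)] by simp

lemma ncycles_Union:
  assumes fF: "finite F" and disj: "pairwise disjnt F"
    and P: "\<And>A. A \<in> F \<Longrightarrow> perm_on A h"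
  shows "ncycles (\<Union>F) h i = (\<Sum>A\<in>F. ncycles A h i)"
proof -
  let ?O = "\<lambda>A. {orbit_of h x | x. x \<in> A \<and> card (orbit_of h x) = i}"
  have eq: "?O (\<Union>F) = (\<Union>A\<in>F. ?O A)" by (rule set_eqI) blast
  have fin: "finite (?O A)" if "A \<in> F" for A
  proof -
    have "?O A \<subseteq> orbit_of h ` A" by auto
    thus ?thesis using perm_on.fin[OF P[OF that]] finite_subset by blast
  qed
  have "card (\<Union>A\<in>F. ?O A) = (\<Sum>A\<in>F. card (?O A))"
  proof (rule card_UN_disjoint[OF fF])
    show "\<forall>A\<in>F. finite (?O A)" using fin by blast
    show "\<forall>A\<in>F. \<forall>B\<in>F. A \<noteq> B \<longrightarrow> ?O A \<inter> ?O B = {}"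
    proof (intro ballI impI)
      fix A B assume AB: "A \<in> F" "B \<in> F" "A \<noteq> B"
      show "?O A \<inter> ?O B = {}"
      proof (rule ccontr)
        assume "?O A \<inter> ?O B \<noteq> {}"
        then obtain x y where xy: "x \<in> A" "y \<in> B" "orbit_of h x = orbit_of h y" by blast
        have "x \<in> orbit_of h y" using xy(3) perm_on.in_orbit[OF P[OF AB(1)], of x] by simp
        hence "x \<in> B" using perm_on.orbit_subset[OF P[OF AB(2)] xy(2)] by blast
        thus False using xy(1) disj AB unfolding pairwise_def disjnt_def by blast
      qed
    qed
  qed
  thus ?thesis unfolding ncycles_def eq .
qed

lemma perm_on_Union:
  assumes fF: "finite F" and P: "\<And>A. A \<in> F \<Longrightarrow> perm_on A h" and disj: "pairwise disjnt F"
  shows "perm_on (\<Union>F) h"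
proof
  show "finite (\<Union>F)" using fF P perm_on.fin by (intro finite_Union) blast+
  show "h x \<in> \<Union>F" if xF: "x \<in> \<Union>F" for x
  proof -
    obtain A where "A \<in> F" "x \<in> A" using xF by blast
    thus ?thesis using perm_on.maps[OF P[OF \<open>A \<in> F\<close>]] by blast
  qed
  show "inj_on h (\<Union>F)"
  proof (rule inj_onI)
    fix x y assume xy: "x \<in> \<Union>F" "y \<in> \<Union>F" "h x = h y"
    then obtain A B where AB: "A \<in> F" "B \<in> F" "x \<in> A" "y \<in> B" by blast
    have "h x \<in> A" "h y \<in> B" using AB perm_on.maps[OF P[OF AB(1)]] perm_on.maps[OF P[OF AB(2)]] by auto
    have "A = B"
    proof (rule ccontr)
      assume "A \<noteq> B"
      hence "A \<inter> B = {}" using disj AB(1,2) unfolding pairwise_def disjnt_def by simp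
      thus False using \<open>h x \<in> A\<close> \<open>h y \<in> B\<close> xy(3) by auto
    qed
    have "inj_on h A" using perm_on.inj[OF P[OF AB(1)]] .
    thus "x = y" using inj_onD[of h A x y] xy(3) AB \<open>A = B\<close> by blast
  qed
qed

lemma CT_Union:
  assumes fF: "finite F" and disj: "pairwise disjnt F"
    and P: "\<And>A. A \<in> F \<Longrightarrow> perm_on A h"
  shows "CT (\<Union>F) h = (\<Prod>A\<in>F. CT A h)"
proof -
  let ?N = "card (\<Union>F)"
  interpret U: perm_on "\<Union>F" h by (rule perm_on_Union[OF fF P disj])
  have "CT (\<Union>F) h = (\<Prod>i\<in>{1..?N}. var i ^ (\<Sum>A\<in>F. ncycles A h i))"
    by (simp add: CT_def ncycles_Union[OF fF disj P])
  also have "\<dots> = (\<Prod>A\<in>F. \<Prod>i\<in>{1..?N}. var i ^ ncycles A h i)"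
    unfolding power_sum by (rule prod.swap)
  also have "\<dots> = (\<Prod>A\<in>F. CT A h)"
  proof (rule prod.cong[OF refl])
    fix A assume "A \<in> F"
    have "card A \<le> ?N" using \<open>A \<in> F\<close> U.fin by (intro card_mono) auto
    thus "(\<Prod>i\<in>{1..?N}. var i ^ ncycles A h i) = CT A h"
      using perm_on.CT_superset[OF P[OF \<open>A \<in> F\<close>]] by simp
  qed
  finally show ?thesis .
qed



lemma perm_on_permutes: "finite S \<Longrightarrow> h permutes S \<Longrightarrow> perm_on S h"
  by (unfold_locales) (auto simp: permutes_in_image permutes_inj_on)

lemma hol_map_inj:
  assumes "coprime a m" "x < m" "y < m" "hol_map m a b x = hol_map m a b y"
  shows "x = y"
proof -
  have "(a * x + b) mod m = (a * y + b) mod m" using assms by (simp add: hol_map_def)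
  hence "int ((a * x + b) mod m) = int ((a * y + b) mod m)" by (rule arg_cong)
  hence "int (a * x + b) mod int m = int (a * y + b) mod int m" by (simp only: of_nat_mod)
  hence "int m dvd int (a * x + b) - int (a * y + b)" by (simp only: mod_eq_dvd_iff)
  moreover have "int (a * x + b) - int (a * y + b) = int a * (int x - int y)" by (simp add: algebra_simps)
  ultimately have "int m dvd int a * (int x - int y)" by simp
  moreover have "coprime (int m) (int a)" using assms(1) by (simp add: coprime_commute)
  ultimately have dv: "int m dvd int x - int y" using coprime_dvd_mult_right_iff by blast
  have lt: "\<bar>int x - int y\<bar> < int m" using assms by auto
  have "int x - int y = 0"
  proof (rule ccontr)
    assume "int x - int y \<noteq> 0"
    hence "\<bar>int m\<bar> \<le> \<bar>int x - int y\<bar>" using dv by (rule dvd_imp_le_int)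
    thus False using lt by simp
  qed
  thus ?thesis by simp
qed

lemma Hol_permutes: assumes "h \<in> Hol m" shows "h permutes {0..<m}"
proof -
  obtain a b where h: "h = hol_map m a b" "coprime a m" using assms by (auto simp: Hol_def)
  have inj: "inj_on h {0..<m}" using hol_map_inj[OF h(2)] h(1) by (auto intro: inj_onI)
  have sub: "h ` {0..<m} \<subseteq> {0..<m}" using h(1) by (auto simp: hol_map_def)
  have "h ` {0..<m} = {0..<m}" by (rule endo_inj_surj[OF _ sub inj]) simp
  hence "bij_betw h {0..<m} {0..<m}" using inj by (simp add: bij_betw_def)
  moreover have "\<And>x. x \<notin> {0..<m} \<Longrightarrow> h x = x" using h(1) by (simp add: hol_map_def)
  ultimately show ?thesis by (rule bij_imp_permutes)
qed

lemma Hol_lt: "h \<in> Hol m \<Longrightarrow> x < m \<Longrightarrow> h x < m"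
  using permutes_in_image[OF Hol_permutes, of h m x] by simp

lemma Hol_comp: assumes "h1 \<in> Hol m" "h2 \<in> Hol m" shows "h1 \<circ> h2 \<in> Hol m"
proof -
  obtain a b where h1: "h1 = hol_map m a b" "coprime a m" "a < m" "b < m" using assms by (auto simp: Hol_def)
  obtain a' b' where h2: "h2 = hol_map m a' b'" "coprime a' m" "a' < m" "b' < m" using assms by (auto simp: Hol_def)
  have m: "m > 0" using h1(3) by simp
  have "h1 \<circ> h2 = hol_map m (a * a' mod m) ((a * b' + b) mod m)"
  proof
    fix x show "(h1 \<circ> h2) x = hol_map m (a * a' mod m) ((a * b' + b) mod m) x"
    proof (cases "x < m")
      case True
      have "(a * ((a' * x + b') mod m) + b) mod m = ((a * ((a' * x + b') mod m)) mod m + b) mod m"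
        by (rule mod_add_left_eq[symmetric])
      also have "(a * ((a' * x + b') mod m)) mod m = (a * (a' * x + b')) mod m"
        by (rule mod_mult_right_eq)
      also have "((a * (a' * x + b')) mod m + b) mod m = (a * (a' * x + b') + b) mod m"
        by (rule mod_add_left_eq)
      also have "a * (a' * x + b') + b = (a * a') * x + (a * b' + b)" by (simp add: algebra_simps)
      also have "((a * a') * x + (a * b' + b)) mod m = ((a * a') * x mod m + (a * b' + b) mod m) mod m"
        by (rule mod_add_eq[symmetric])
      also have "(a * a') * x mod m = ((a * a') mod m) * x mod m"
        by (rule mod_mult_left_eq[symmetric])
      also have "(((a * a') mod m) * x mod m + (a * b' + b) mod m) mod m = ((a * a' mod m) * x + (a * b' + b) mod m) mod m"
        by (rule mod_add_left_eq)
      finally show ?thesis using True h1 h2 m by (simp add: hol_map_def)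
    next
      case False thus ?thesis using h1 h2 by (simp add: hol_map_def)
    qed
  qed
  moreover have "coprime (a * a' mod m) m" using h1 h2 by simp
  moreover have "a * a' mod m < m" "(a * b' + b) mod m < m" using m by auto
  ultimately show ?thesis unfolding Hol_def by blast
qed

lemma id_Hol: assumes "m > 0" shows "id \<in> Hol m"
proof -
  have "id = hol_map m (1 mod m) 0"
  proof
    fix x show "id x = hol_map m (1 mod m) 0 x"
      by (cases "m = 1") (auto simp: hol_map_def)
  qed
  moreover have "coprime (1 mod m) m" by (cases "m = 1") auto
  moreover have "1 mod m < m" "(0::nat) < m" using assms by auto
  ultimately show ?thesis unfolding Hol_def by blast
qed

lemma finite_Hol: "finite (Hol m)"
proof -
  have "Hol m \<subseteq> (\<lambda>(a, b). hol_map m a b) ` ({0..<m} \<times> {0..<m})" by (auto simp: Hol_def)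
  thus ?thesis by (rule finite_subset) auto
qed

lemma Hol_surj: "h \<in> Hol m \<Longrightarrow> surj h"
  using Hol_permutes permutes_surj by blast



definition wf :: "nat \<Rightarrow> nat \<Rightarrow> (nat \<Rightarrow> nat) \<Rightarrow> (nat \<Rightarrow> nat \<Rightarrow> nat) \<Rightarrow> nat \<times> nat \<Rightarrow> nat \<times> nat" where
  "wf d m \<sigma> g = (\<lambda>(x, i). if (x, i) \<in> W_carrier d m then (g (\<sigma> i) x, \<sigma> i) else (x, i))"

lemma W_eq: "W d m = {wf d m \<sigma> g | \<sigma> g. \<sigma> \<in> Sym d \<and> (\<forall>j<d. g j \<in> Hol m)}"
  by (simp add: W_def wf_def)

primrec walk :: "(nat \<Rightarrow> nat \<Rightarrow> nat) \<Rightarrow> (nat \<Rightarrow> nat) \<Rightarrow> nat \<Rightarrow> nat \<Rightarrow> nat \<Rightarrow> nat" where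
  "walk g \<sigma> r 0 = id"
| "walk g \<sigma> r (Suc n) = g ((\<sigma> ^^ Suc n) r) \<circ> walk g \<sigma> r n"

lemma walk_cong: "(\<And>k. k \<in> {1..n} \<Longrightarrow> g' ((\<sigma> ^^ k) r) = g ((\<sigma> ^^ k) r)) \<Longrightarrow> walk g' \<sigma> r n = walk g \<sigma> r n"
proof (induction n)
  case 0 show ?case by simp
next
  case (Suc n)
  have "walk g' \<sigma> r n = walk g \<sigma> r n" using Suc by auto
  moreover have "Suc n \<in> {1..Suc n}" by simp
  hence "g' ((\<sigma> ^^ Suc n) r) = g ((\<sigma> ^^ Suc n) r)" using Suc.prems by blast
  ultimately show ?case by (simp only: walk.simps)
qed

locale wsetup =
  fixes d m :: nat and \<sigma> :: "nat \<Rightarrow> nat" and g :: "nat \<Rightarrow> nat \<Rightarrow> nat"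
  assumes m: "m > 0" and \<sigma>: "\<sigma> permutes {0..<d}" and g: "\<And>j. j < d \<Longrightarrow> g j \<in> Hol m"
begin

abbreviation "w \<equiv> wf d m \<sigma> g"

lemma \<sigma>lt: "r < d \<Longrightarrow> (\<sigma> ^^ n) r < d"
  by (induction n) (use permutes_in_image[OF \<sigma>] in auto)

lemma walk_Hol: "r < d \<Longrightarrow> walk g \<sigma> r n \<in> Hol m"
proof (induction n)
  case 0 show ?case using id_Hol[OF m] by (simp only: walk.simps)
next
  case (Suc n)
  have "g ((\<sigma> ^^ Suc n) r) \<in> Hol m" using g \<sigma>lt[OF Suc.prems] by blast
  thus ?case using Hol_comp[OF _ Suc.IH[OF Suc.prems]] by (simp only: walk.simps)
qed

lemma w_apply: "x < m \<Longrightarrow> r < d \<Longrightarrow> w (x, r) = (g (\<sigma> r) x, \<sigma> r)"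
  by (simp add: wf_def W_carrier_def)

lemma w_pow: "x < m \<Longrightarrow> r < d \<Longrightarrow> (w ^^ n) (x, r) = (walk g \<sigma> r n x, (\<sigma> ^^ n) r)"
proof (induction n)
  case 0 thus ?case by simp
next
  case (Suc n)
  have "walk g \<sigma> r n x < m" using Hol_lt[OF walk_Hol[OF Suc.prems(2)] Suc.prems(1)] .
  moreover have "(\<sigma> ^^ n) r < d" using \<sigma>lt[OF Suc.prems(2)] .
  ultimately show ?case using Suc by (simp add: w_apply)
qed

lemma w_perm: "w permutes W_carrier d m"
proof (rule bij_imp_permutes)
  let ?C = "W_carrier d m"
  have maps: "w p \<in> ?C" if pC: "p \<in> ?C" for p
  proof -
    obtain x i where p: "p = (x, i)" "x < m" "i < d" using pC by (cases p) (auto simp: W_carrier_def)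
    have "g (\<sigma> i) x < m" using Hol_lt[OF g p(2)] permutes_in_image[OF \<sigma>] p(3) by auto
    moreover have "\<sigma> i < d" using permutes_in_image[OF \<sigma>] p(3) by auto
    ultimately show ?thesis using p by (simp add: w_apply W_carrier_def)
  qed
  have inj: "inj_on w ?C"
  proof (rule inj_onI)
    fix p q assume pq: "p \<in> ?C" "q \<in> ?C" "w p = w q"
    obtain x i where p: "p = (x, i)" "x < m" "i < d" using pq(1) by (cases p) (auto simp: W_carrier_def)
    obtain y j where q: "q = (y, j)" "y < m" "j < d" using pq(2) by (cases q) (auto simp: W_carrier_def)
    have e: "g (\<sigma> i) x = g (\<sigma> j) y" "\<sigma> i = \<sigma> j" using pq(3) p q by (auto simp: w_apply)
    have ij: "i = j" using e(2) permutes_inj[OF \<sigma>] by (auto dest: injD)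
    have "\<sigma> i < d" using permutes_in_image[OF \<sigma>] p(3) by auto
    hence "g (\<sigma> i) permutes {0..<m}" using Hol_permutes g by blast
    hence "x = y" using e(1) ij permutes_inj by (auto dest: injD)
    thus "p = q" using p q ij by simp
  qed
  have "w ` ?C \<subseteq> ?C" using maps by blast
  moreover have "finite ?C" by (simp add: W_carrier_def)
  ultimately have "w ` ?C = ?C" using endo_inj_surj[OF _ _ inj] by blast
  thus "bij_betw w ?C ?C" using inj by (simp add: bij_betw_def)
  show "\<And>x. x \<notin> ?C \<Longrightarrow> w x = x" by (auto simp: wf_def)
qed

lemma sigma_perm_on: "perm_on {0..<d} \<sigma>" using perm_on_permutes[OF _ \<sigma>] by simp


lemma CT_block:
  assumes r: "r < d"
  defines "Ob \<equiv> orbit_of \<sigma> r"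
  defines "l \<equiv> card Ob"
  defines "h \<equiv> walk g \<sigma> r l"
  shows "CT ({0..<m} \<times> Ob) w = CI_pow l (CT {0..<m} h)"
proof -
  define Z where "Z = {0..<m}"
  interpret sp: perm_on "{0..<d}" \<sigma> by (rule sigma_perm_on)
  have rD: "r \<in> {0..<d}" using r by simp
  have ObD: "Ob \<subseteq> {0..<d}" unfolding Ob_def by (rule sp.orbit_subset[OF rD])
  have rOb: "r \<in> Ob" unfolding Ob_def by (rule sp.in_orbit)
  have finOb: "finite Ob" using ObD finite_subset by blast
  have lpos: "l > 0" unfolding l_def using rOb finOb card_gt_0_iff by blast
  have \<sigma>l: "(\<sigma> ^^ l) r = r" using sp.funpow_eq_iff[OF rD, of l] unfolding l_def Ob_def by simp
  have Ob\<sigma>: "\<sigma> j \<in> Ob" if jO: "j \<in> Ob" for j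
  proof -
    obtain k where "j = (\<sigma> ^^ k) r" using jO unfolding Ob_def orbit_of_def by blast
    hence "\<sigma> j = (\<sigma> ^^ Suc k) r" by simp
    thus ?thesis unfolding Ob_def orbit_of_def by blast
  qed
  have hH: "h \<in> Hol m" unfolding h_def by (rule walk_Hol[OF r])
  interpret hp: perm_on Z h unfolding Z_def by (rule perm_on_permutes[OF _ Hol_permutes[OF hH]]) simp
  have ZOb_C: "Z \<times> Ob \<subseteq> W_carrier d m" using ObD by (auto simp: Z_def W_carrier_def)
  interpret wp: perm_on "Z \<times> Ob" w
  proof
    show "finite (Z \<times> Ob)" using finOb by (simp add: Z_def)
    show "w p \<in> Z \<times> Ob" if pZ: "p \<in> Z \<times> Ob" for p
    proof -
      obtain x j where p: "p = (x, j)" "x < m" "j \<in> Ob" using pZ by (cases p) (auto simp: Z_def)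
      have jd: "j < d" using ObD p(3) by auto
      have "g (\<sigma> j) x < m" using Hol_lt[OF g p(2)] permutes_in_image[OF \<sigma>] jd by auto
      thus ?thesis using p Ob\<sigma>[OF p(3)] w_apply[OF p(2) jd] by (simp add: Z_def)
    qed
    show "inj_on w (Z \<times> Ob)" using permutes_inj_on[OF w_perm] .
  qed
  have wl: "(w ^^ l) (y, r) = (h y, r)" if "y < m" for y
    using w_pow[OF that r, of l] \<sigma>l by (simp add: h_def)
  have wlq: "(w ^^ (l * q)) (x, r) = ((h ^^ q) x, r)" if x: "x < m" for x q
  proof (induction q)
    case 0 show ?case by simp
  next
    case (Suc q)
    have "(w ^^ (l * Suc q)) (x, r) = (w ^^ l) ((w ^^ (l * q)) (x, r))"
      by (simp only: mult_Suc_right funpow_add comp_apply)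
    also have "\<dots> = (w ^^ l) ((h ^^ q) x, r)" using Suc by simp
    also have "\<dots> = (h ((h ^^ q) x), r)"
    proof (rule wl)
      show "(h ^^ q) x < m" using hp.funpow_in[of x q] x by (simp add: Z_def)
    qed
    finally show ?case by simp
  qed
  have keyA: "card (orbit_of w (x, r)) = l * card (orbit_of h x)" if x: "x < m" for x
  proof -
    have xZ: "x \<in> Z" using x by (simp add: Z_def)
    have xrZ: "(x, r) \<in> Z \<times> Ob" using xZ rOb by simp
    let ?c = "card (orbit_of h x)"
    have fixiff: "(w ^^ n) (x, r) = (x, r) \<longleftrightarrow> l * ?c dvd n" for n
    proof (cases "l dvd n")
      case True
      then obtain q where n: "n = l * q" by blast
      have "(w ^^ n) (x, r) = (x, r) \<longleftrightarrow> (h ^^ q) x = x" using wlq[OF x, of q] n by simp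
      also have "\<dots> \<longleftrightarrow> ?c dvd q" by (rule hp.funpow_eq_iff[OF xZ])
      also have "\<dots> \<longleftrightarrow> l * ?c dvd n" using n lpos by simp
      finally show ?thesis .
    next
      case False
      have "snd ((w ^^ n) (x, r)) = (\<sigma> ^^ n) r" using w_pow[OF x r] by simp
      moreover have "(\<sigma> ^^ n) r \<noteq> r" using sp.funpow_eq_iff[OF rD, of n] False unfolding l_def Ob_def by simp
      ultimately have "(w ^^ n) (x, r) \<noteq> (x, r)" by auto
      moreover have "\<not> l * ?c dvd n" using False dvd_mult_left by blast
      ultimately show ?thesis by simp
    qed
    let ?C = "card (orbit_of w (x, r))"
    have "?C dvd n \<longleftrightarrow> l * ?c dvd n" for n
      using wp.funpow_eq_iff[OF xrZ, of n] fixiff[of n] by simp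
    from this[of ?C] this[of "l * ?c"] show ?thesis by (simp add: dvd_antisym)
  qed
  define P where "P p s \<longleftrightarrow> card (orbit_of w p) = s" for p s
  have keyB: "card {x \<in> Z. P (x, j) s} = card {x \<in> Z. P (x, r) s}" if j: "j \<in> Ob" for j s
  proof -
    obtain t where t: "j = (\<sigma> ^^ t) r" using j unfolding Ob_def orbit_of_def by blast
    define \<phi> where "\<phi> = walk g \<sigma> r t"
    have \<phi>p: "\<phi> permutes Z" unfolding \<phi>_def Z_def by (rule Hol_permutes[OF walk_Hol[OF r]])
    have wt: "(w ^^ t) (x, r) = (\<phi> x, j)" if "x \<in> Z" for x
      using w_pow[of x r t] that r t by (simp add: \<phi>_def Z_def)
    have Pj: "P (\<phi> x, j) s = P (x, r) s" if xZ: "x \<in> Z" for x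
    proof -
      have "orbit_of w ((w ^^ t) (x, r)) = orbit_of w (x, r)"
        by (rule wp.orbit_same') (use xZ rOb in simp)
      thus ?thesis using wt[OF xZ] by (simp add: P_def)
    qed
    have "{x \<in> Z. P (x, j) s} = \<phi> ` {x \<in> Z. P (x, r) s}"
    proof
      show "\<phi> ` {x \<in> Z. P (x, r) s} \<subseteq> {x \<in> Z. P (x, j) s}"
        using Pj permutes_in_image[OF \<phi>p] by auto
      show "{x \<in> Z. P (x, j) s} \<subseteq> \<phi> ` {x \<in> Z. P (x, r) s}"
      proof
        fix y assume y: "y \<in> {x \<in> Z. P (x, j) s}"
        then obtain x where x: "x \<in> Z" "y = \<phi> x" using permutes_image[OF \<phi>p] by blast
        thus "y \<in> \<phi> ` {x \<in> Z. P (x, r) s}" using y Pj[OF x(1)] by auto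
      qed
    qed
    moreover have "inj_on \<phi> {x \<in> Z. P (x, r) s}" using permutes_inj_on[OF \<phi>p] .
    ultimately show ?thesis by (simp add: card_image)
  qed
  have keyC: "ncycles (Z \<times> Ob) w s * s = l * card {x \<in> Z. l * card (orbit_of h x) = s}"
    if s: "s > 0" for s
  proof -
    have "ncycles (Z \<times> Ob) w s * s = card {p \<in> Z \<times> Ob. P p s}"
      using wp.ncycles_mult[OF s] by (simp add: P_def)
    also have "{p \<in> Z \<times> Ob. P p s} = (\<lambda>(j, x). (x, j)) ` (SIGMA j:Ob. {x \<in> Z. P (x, j) s})"
      by auto
    also have "card \<dots> = card (SIGMA j:Ob. {x \<in> Z. P (x, j) s})"
      by (rule card_image) (auto intro: inj_onI)
    also have "\<dots> = (\<Sum>j\<in>Ob. card {x \<in> Z. P (x, j) s})"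
      using finOb by (simp add: Z_def)
    also have "\<dots> = (\<Sum>j\<in>Ob. card {x \<in> Z. P (x, r) s})" using keyB by simp
    also have "\<dots> = l * card {x \<in> Z. P (x, r) s}" by (simp add: l_def)
    also have "{x \<in> Z. P (x, r) s} = {x \<in> Z. l * card (orbit_of h x) = s}"
      using keyA by (auto simp: P_def Z_def)
    finally show ?thesis .
  qed
  have keyD: "ncycles (Z \<times> Ob) w (k * l) = ncycles Z h k" if k: "k > 0" for k
  proof -
    have "ncycles (Z \<times> Ob) w (k * l) * (k * l) = l * card {x \<in> Z. l * card (orbit_of h x) = k * l}"
      using keyC[of "k * l"] k lpos by simp
    also have "{x \<in> Z. l * card (orbit_of h x) = k * l} = {x \<in> Z. card (orbit_of h x) = k}"
      using lpos by (auto simp: mult.commute)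
    also have "card \<dots> = ncycles Z h k * k" using hp.ncycles_mult[OF k] by simp
    finally have "ncycles (Z \<times> Ob) w (k * l) * (k * l) = ncycles Z h k * (k * l)" by (simp add: mult_ac)
    thus ?thesis using k lpos by simp
  qed
  have keyE: "ncycles (Z \<times> Ob) w s = 0" if s: "s > 0" "\<not> l dvd s" for s
  proof -
    have E: "{x \<in> Z. l * card (orbit_of h x) = s} = {}" using s(2) by auto
    have "ncycles (Z \<times> Ob) w s * s = 0" unfolding keyC[OF s(1)] E by simp
    thus ?thesis using s(1) by simp
  qed
  have cardB: "card (Z \<times> Ob) = m * l" by (simp add: Z_def l_def card_cartesian_product)
  have "CT (Z \<times> Ob) w = (\<Prod>s\<in>{1..m * l}. var s ^ ncycles (Z \<times> Ob) w s)"
    by (simp add: CT_def cardB)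
  also have "\<dots> = (\<Prod>s\<in>(\<lambda>k. k * l) ` {1..m}. var s ^ ncycles (Z \<times> Ob) w s)"
  proof (rule prod.mono_neutral_right)
    show "(\<lambda>k. k * l) ` {1..m} \<subseteq> {1..m * l}" using lpos by auto
    show "\<forall>s\<in>{1..m * l} - (\<lambda>k. k * l) ` {1..m}. var s ^ ncycles (Z \<times> Ob) w s = 1"
    proof
      fix s assume s: "s \<in> {1..m * l} - (\<lambda>k. k * l) ` {1..m}"
      have "\<not> l dvd s"
      proof
        assume "l dvd s"
        then obtain k where k0: "s = l * k" by (rule dvdE)
        hence k: "s = k * l" by simp
        hence "k \<in> {1..m}" using s lpos by (auto simp: mult.commute)
        thus False using s k by auto
      qed
      thus "var s ^ ncycles (Z \<times> Ob) w s = 1" using keyE s by simp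
    qed
  qed simp
  also have "\<dots> = (\<Prod>k\<in>{1..m}. var (k * l) ^ ncycles (Z \<times> Ob) w (k * l))"
  proof -
    have "inj_on (\<lambda>k. k * l) {1..m}" using lpos by (auto intro: inj_onI)
    from prod.reindex[OF this, of "\<lambda>s. var s ^ ncycles (Z \<times> Ob) w s"] show ?thesis by (simp add: comp_def)
  qed
  also have "\<dots> = (\<Prod>k\<in>{1..m}. var (k * l) ^ ncycles Z h k)"
    using keyD by (intro prod.cong) auto
  also have "\<dots> = CI_pow l (CT Z h)" by (simp add: CI_pow_CT Z_def)
  finally show ?thesis by (simp add: Z_def)
qed


lemma perm_on_block:
  assumes r: "r < d"
  shows "perm_on ({0..<m} \<times> orbit_of \<sigma> r) w"
proof -
  interpret sp: perm_on "{0..<d}" \<sigma> by (rule sigma_perm_on)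
  let ?Ob = "orbit_of \<sigma> r"
  have ObD: "?Ob \<subseteq> {0..<d}" by (rule sp.orbit_subset) (use r in simp)
  have Ob\<sigma>: "\<sigma> j \<in> ?Ob" if jO: "j \<in> ?Ob" for j
  proof -
    obtain k where "j = (\<sigma> ^^ k) r" using jO unfolding orbit_of_def by blast
    hence "\<sigma> j = (\<sigma> ^^ Suc k) r" by simp
    thus ?thesis unfolding orbit_of_def by blast
  qed
  show ?thesis
  proof
    show "finite ({0..<m} \<times> ?Ob)" using ObD finite_subset by blast
    show "w p \<in> {0..<m} \<times> ?Ob" if pZ: "p \<in> {0..<m} \<times> ?Ob" for p
    proof -
      obtain x j where p: "p = (x, j)" "x < m" "j \<in> ?Ob" using pZ by (cases p) auto
      have jd: "j < d" using ObD p(3) by auto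
      have "g (\<sigma> j) x < m" using Hol_lt[OF g p(2)] permutes_in_image[OF \<sigma>] jd by auto
      thus ?thesis using p Ob\<sigma>[OF p(3)] w_apply[OF p(2) jd] by simp
    qed
    show "inj_on w ({0..<m} \<times> ?Ob)" using permutes_inj_on[OF w_perm] .
  qed
qed

lemma CT_w_decomp:
  "CT (W_carrier d m) w = (\<Prod>Ob \<in> orbit_of \<sigma> ` {0..<d}.
      CI_pow (card Ob) (CT {0..<m} (walk g \<sigma> (Min Ob) (card Ob))))"
proof -
  interpret sp: perm_on "{0..<d}" \<sigma> by (rule sigma_perm_on)
  define Orbs where "Orbs = orbit_of \<sigma> ` {0..<d}"
  define F where "F = (\<lambda>Ob. {0..<m} \<times> Ob) ` Orbs"
  have UF: "\<Union>F = W_carrier d m"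
  proof
    show "\<Union>F \<subseteq> W_carrier d m"
    proof
      fix p assume "p \<in> \<Union>F"
      then obtain x i a where p: "p = (x, i)" "x < m" "a < d" "i \<in> orbit_of \<sigma> a"
        by (auto simp: F_def Orbs_def)
      have "i < d" using sp.orbit_subset[of a] p by auto
      thus "p \<in> W_carrier d m" using p by (simp add: W_carrier_def)
    qed
    show "W_carrier d m \<subseteq> \<Union>F"
    proof
      fix p assume "p \<in> W_carrier d m"
      then obtain x i where p: "p = (x, i)" "x < m" "i < d" by (cases p) (auto simp: W_carrier_def)
      have "i \<in> orbit_of \<sigma> i" by (rule sp.in_orbit)
      thus "p \<in> \<Union>F" using p by (auto simp: F_def Orbs_def)
    qed
  qed
  have orbdisj: "A \<inter> B = {}" if AB: "A \<in> Orbs" "B \<in> Orbs" "A \<noteq> B" for A B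
  proof (rule ccontr)
    assume "A \<inter> B \<noteq> {}"
    then obtain z where z: "z \<in> A" "z \<in> B" by blast
    obtain a where a: "a < d" "A = orbit_of \<sigma> a" using AB(1) by (auto simp: Orbs_def)
    obtain b where b: "b < d" "B = orbit_of \<sigma> b" using AB(2) by (auto simp: Orbs_def)
    have "orbit_of \<sigma> z = A" using sp.orbit_same[of a z] a z by simp
    moreover have "orbit_of \<sigma> z = B" using sp.orbit_same[of b z] b z by simp
    ultimately show False using AB(3) by simp
  qed
  have injF: "inj_on (\<lambda>Ob. {0..<m} \<times> Ob) Orbs"
  proof (rule inj_onI)
    fix A B assume "{0..<m} \<times> A = {0..<m} \<times> B"
    thus "A = B" using m by (auto simp: Times_eq_cancel2)
  qed
  have disjF: "pairwise disjnt F"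
    unfolding pairwise_def disjnt_def F_def
  proof (intro ballI impI)
    fix X Y assume XY: "X \<in> (\<lambda>Ob. {0..<m} \<times> Ob) ` Orbs" "Y \<in> (\<lambda>Ob. {0..<m} \<times> Ob) ` Orbs" "X \<noteq> Y"
    then obtain A B where AB: "A \<in> Orbs" "B \<in> Orbs" "X = {0..<m} \<times> A" "Y = {0..<m} \<times> B" by blast
    hence "A \<noteq> B" using XY(3) by blast
    hence "A \<inter> B = {}" using orbdisj AB by blast
    thus "X \<inter> Y = {}" using AB by auto
  qed
  have permF: "perm_on X w" if X: "X \<in> F" for X
  proof -
    obtain r where "r < d" "X = {0..<m} \<times> orbit_of \<sigma> r" using X by (auto simp: F_def Orbs_def)
    thus ?thesis using perm_on_block by simp
  qed
  have "CT (W_carrier d m) w = (\<Prod>X\<in>F. CT X w)"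
    unfolding UF[symmetric]
  proof (rule CT_Union[OF _ disjF permF])
    show "finite F" by (simp add: F_def Orbs_def)
  qed
  also have "\<dots> = (\<Prod>Ob\<in>Orbs. CT ({0..<m} \<times> Ob) w)"
    unfolding F_def using prod.reindex[OF injF, of "\<lambda>X. CT X w"] by (simp add: comp_def)
  also have "\<dots> = (\<Prod>Ob\<in>Orbs. CI_pow (card Ob) (CT {0..<m} (walk g \<sigma> (Min Ob) (card Ob))))"
  proof (rule prod.cong[OF refl])
    fix Ob assume Ob: "Ob \<in> Orbs"
    then obtain a where a: "a < d" "Ob = orbit_of \<sigma> a" by (auto simp: Orbs_def)
    have fin: "finite Ob" using a sp.orbit_finite by simp
    have "a \<in> Ob" using a sp.in_orbit by simp
    hence MinOb: "Min Ob \<in> Ob" using fin Min_in by blast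
    have oMin: "orbit_of \<sigma> (Min Ob) = Ob" using sp.orbit_same[of a "Min Ob"] a MinOb by simp
    have Mind: "Min Ob < d" using MinOb a sp.orbit_subset[of a] by auto
    show "CT ({0..<m} \<times> Ob) w = CI_pow (card Ob) (CT {0..<m} (walk g \<sigma> (Min Ob) (card Ob)))"
      using CT_block[OF Mind] oMin by simp
  qed
  finally show ?thesis unfolding Orbs_def .
qed

end



lemma sum_PiE_reps:
  fixes F :: "nat \<Rightarrow> 'b \<Rightarrow> mpoly"
  assumes D: "finite D" and Rp: "Rp \<subseteq> D" and H: "finite H"
  shows "(\<Sum>g\<in>PiE D (\<lambda>_. H). \<Prod>j\<in>Rp. F j (g j))
         = of_nat (card H) ^ card (D - Rp) * (\<Prod>j\<in>Rp. \<Sum>h\<in>H. F j h)"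
proof -
  define G where "G j = (if j \<in> Rp then F j else (\<lambda>_. 1))" for j
  have "(\<Sum>g\<in>PiE D (\<lambda>_. H). \<Prod>j\<in>Rp. F j (g j)) = (\<Sum>g\<in>PiE D (\<lambda>_. H). \<Prod>j\<in>D. G j (g j))"
  proof (rule sum.cong[OF refl])
    fix g show "(\<Prod>j\<in>Rp. F j (g j)) = (\<Prod>j\<in>D. G j (g j))"
      by (rule prod.mono_neutral_cong_left) (use D Rp in \<open>auto simp: G_def\<close>)
  qed
  also have "\<dots> = (\<Prod>j\<in>D. \<Sum>h\<in>H. G j h)"
    by (rule prod_sum_PiE[symmetric]) (use D H in auto)
  also have "\<dots> = (\<Prod>j\<in>Rp. \<Sum>h\<in>H. G j h) * (\<Prod>j\<in>D - Rp. \<Sum>h\<in>H. G j h)"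
    using prod.subset_diff[OF Rp D] by (simp add: mult.commute)
  also have "(\<Prod>j\<in>Rp. \<Sum>h\<in>H. G j h) = (\<Prod>j\<in>Rp. \<Sum>h\<in>H. F j h)"
    by (rule prod.cong) (auto simp: G_def)
  also have "(\<Prod>j\<in>D - Rp. \<Sum>h\<in>H. G j h) = (\<Prod>j\<in>D - Rp. of_nat (card H))"
    by (rule prod.cong) (auto simp: G_def)
  finally show ?thesis by (simp add: mult.commute)
qed

lemma prod_orbits:
  assumes "perm_on D \<sigma>"
  shows "(\<Prod>Ob\<in>orbit_of \<sigma> ` D. R (card Ob)) = (\<Prod>i\<in>{1..card D}. (R i :: mpoly) ^ ncycles D \<sigma> i)"
proof -
  interpret sp: perm_on D \<sigma> by fact
  have sub: "card ` (orbit_of \<sigma> ` D) \<subseteq> {1..card D}"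
  proof
    fix i assume "i \<in> card ` (orbit_of \<sigma> ` D)"
    then obtain x where x: "x \<in> D" "i = card (orbit_of \<sigma> x)" by blast
    have "card (orbit_of \<sigma> x) \<le> card D" by (rule card_mono[OF sp.fin sp.orbit_subset[OF x(1)]])
    moreover have "card (orbit_of \<sigma> x) > 0"
      using sp.orbit_finite[OF x(1)] sp.in_orbit[of x] card_gt_0_iff by blast
    ultimately show "i \<in> {1..card D}" using x by simp
  qed
  have "(\<Prod>Ob\<in>orbit_of \<sigma> ` D. R (card Ob))
      = (\<Prod>i\<in>{1..card D}. \<Prod>Ob\<in>{Ob. Ob \<in> orbit_of \<sigma> ` D \<and> card Ob = i}. R (card Ob))"
    by (rule prod.group[symmetric]) (use sp.fin sub in auto)
  also have "\<dots> = (\<Prod>i\<in>{1..card D}. R i ^ ncycles D \<sigma> i)"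
  proof (rule prod.cong[OF refl])
    fix i
    have e: "{Ob. Ob \<in> orbit_of \<sigma> ` D \<and> card Ob = i} = {orbit_of \<sigma> x | x. x \<in> D \<and> card (orbit_of \<sigma> x) = i}"
      by auto
    have "(\<Prod>Ob\<in>{Ob. Ob \<in> orbit_of \<sigma> ` D \<and> card Ob = i}. R (card Ob))
        = (\<Prod>Ob\<in>{Ob. Ob \<in> orbit_of \<sigma> ` D \<and> card Ob = i}. R i)" by (rule prod.cong) auto
    also have "\<dots> = R i ^ ncycles D \<sigma> i" by (simp add: e ncycles_def)
    finally show "(\<Prod>Ob\<in>{Ob. Ob \<in> orbit_of \<sigma> ` D \<and> card Ob = i}. R (card Ob)) = R i ^ ncycles D \<sigma> i" .
  qed
  finally show ?thesis .
qed


locale ssetup =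
  fixes d m :: nat and \<sigma> :: "nat \<Rightarrow> nat"
  assumes m: "m > 0" and \<sigma>: "\<sigma> permutes {0..<d}"
begin

abbreviation "D \<equiv> {0..<d}"
abbreviation "P \<equiv> PiE D (\<lambda>_. Hol m)"
definition "Orbs = orbit_of \<sigma> ` D"
definition "Reps = Min ` Orbs"

lemma sp: "perm_on D \<sigma>" using perm_on_permutes[OF _ \<sigma>] by simp

lemma ws: "g \<in> P \<Longrightarrow> wsetup d m \<sigma> g"
  by unfold_locales (use m \<sigma> in \<open>auto simp: PiE_iff\<close>)

lemma Min_orbit: assumes "j \<in> D" shows "Min (orbit_of \<sigma> j) \<in> orbit_of \<sigma> j"
  "orbit_of \<sigma> (Min (orbit_of \<sigma> j)) = orbit_of \<sigma> j" "Min (orbit_of \<sigma> j) \<in> D"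
proof -
  interpret perm_on D \<sigma> by (rule sp)
  show M: "Min (orbit_of \<sigma> j) \<in> orbit_of \<sigma> j"
    using Min_in[OF orbit_finite[OF assms]] in_orbit[of j] by blast
  show "orbit_of \<sigma> (Min (orbit_of \<sigma> j)) = orbit_of \<sigma> j" by (rule orbit_same[OF assms M])
  show "Min (orbit_of \<sigma> j) \<in> D" using orbit_subset[OF assms] M by blast
qed

lemma Reps_sub: "Reps \<subseteq> D" using Min_orbit(3) by (auto simp: Reps_def Orbs_def)

lemma in_Reps: assumes "j \<in> D" shows "j \<in> Reps \<longleftrightarrow> Min (orbit_of \<sigma> j) = j"
proof
  assume "j \<in> Reps"
  then obtain a where a: "a \<in> D" "j = Min (orbit_of \<sigma> a)" by (auto simp: Reps_def Orbs_def)
  thus "Min (orbit_of \<sigma> j) = j" using Min_orbit(2)[OF a(1)] by simp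
next
  assume "Min (orbit_of \<sigma> j) = j"
  thus "j \<in> Reps" using assms unfolding Reps_def Orbs_def by (metis image_eqI)
qed

lemma not_Reps: assumes j: "j \<in> Reps" and k: "0 < k" "k < card (orbit_of \<sigma> j)"
  shows "(\<sigma> ^^ k) j \<in> D - Reps"
proof -
  interpret perm_on D \<sigma> by (rule sp)
  have jD: "j \<in> D" using j Reps_sub by blast
  have kD: "(\<sigma> ^^ k) j \<in> D" using funpow_in[OF jD] .
  have ne: "(\<sigma> ^^ k) j \<noteq> j" using funpow_eq_iff[OF jD, of k] k by (auto dest: dvd_imp_le)
  have "orbit_of \<sigma> ((\<sigma> ^^ k) j) = orbit_of \<sigma> j" by (rule orbit_same'[OF jD])
  hence "(\<sigma> ^^ k) j \<notin> Reps" using in_Reps[OF kD] in_Reps[OF jD] j ne by simp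
  thus ?thesis using kD by simp
qed

definition \<Phi> :: "(nat \<Rightarrow> nat \<Rightarrow> nat) \<Rightarrow> nat \<Rightarrow> nat \<Rightarrow> nat" where
  "\<Phi> g = restrict (\<lambda>j. if j \<in> Reps then walk g \<sigma> j (card (orbit_of \<sigma> j)) else g j) D"

lemma walk_split: assumes j: "j \<in> D"
  shows "walk g \<sigma> j (card (orbit_of \<sigma> j)) = g j \<circ> walk g \<sigma> j (card (orbit_of \<sigma> j) - 1)"
proof -
  interpret perm_on D \<sigma> by (rule sp)
  let ?l = "card (orbit_of \<sigma> j)"
  have lpos: "?l > 0" using orbit_finite[OF j] in_orbit[of j] card_gt_0_iff by blast
  have "(\<sigma> ^^ ?l) j = j" using funpow_eq_iff[OF j, of ?l] by simp
  moreover have "?l = Suc (?l - 1)" using lpos by simp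
  ultimately show ?thesis by (metis walk.simps(2))
qed

lemma \<Phi>_in: "g \<in> P \<Longrightarrow> \<Phi> g \<in> P"
  using wsetup.walk_Hol[OF ws] by (auto simp: \<Phi>_def PiE_iff)

lemma \<Phi>_inj: "inj_on \<Phi> P"
proof (rule inj_onI)
  fix g g' assume g: "g \<in> P" and g': "g' \<in> P" and e: "\<Phi> g = \<Phi> g'"
  have nR: "g j = g' j" if "j \<in> D - Reps" for j
    using fun_cong[OF e, of j] that by (simp add: \<Phi>_def)
  show "g = g'"
  proof (rule PiE_ext[OF g g'])
    fix j assume jD: "j \<in> D"
    show "g j = g' j"
    proof (cases "j \<in> Reps")
      case False thus ?thesis using nR jD by simp
    next
      case True
      let ?l = "card (orbit_of \<sigma> j)"
      have A: "walk g \<sigma> j (?l - 1) = walk g' \<sigma> j (?l - 1)"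
      proof (rule walk_cong)
        fix k assume k: "k \<in> {1..?l - 1}"
        have "(\<sigma> ^^ k) j \<in> D - Reps" by (rule not_Reps[OF True]) (use k in auto)
        thus "g ((\<sigma> ^^ k) j) = g' ((\<sigma> ^^ k) j)" using nR by simp
      qed
      have "walk g \<sigma> j ?l = walk g' \<sigma> j ?l" using fun_cong[OF e, of j] True jD by (simp add: \<Phi>_def)
      hence comp: "g j \<circ> walk g \<sigma> j (?l - 1) = g' j \<circ> walk g \<sigma> j (?l - 1)"
        using walk_split[OF jD, of g] walk_split[OF jD, of g'] A by simp
      have "surj (walk g \<sigma> j (?l - 1))"
        using Hol_surj[OF wsetup.walk_Hol[OF ws[OF g]]] jD by simp
      show ?thesis
      proof
        fix y
        obtain x where "y = walk g \<sigma> j (?l - 1) x" using \<open>surj _\<close> by (metis surjD)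
        thus "g j y = g' j y" using fun_cong[OF comp, of x] by simp
      qed
    qed
  qed
qed

lemma \<Phi>_image: "\<Phi> ` P = P"
  by (rule endo_inj_surj[OF _ _ \<Phi>_inj]) (use \<Phi>_in finite_Hol in \<open>auto intro: finite_PiE\<close>)


lemma Orbs_Min: assumes "Ob \<in> Orbs" shows "Min Ob \<in> D" "orbit_of \<sigma> (Min Ob) = Ob" "Min Ob \<in> Reps"
proof -
  obtain a where a: "a \<in> D" "Ob = orbit_of \<sigma> a" using assms by (auto simp: Orbs_def)
  show "Min Ob \<in> D" "orbit_of \<sigma> (Min Ob) = Ob" using Min_orbit[OF a(1)] a(2) by auto
  show "Min Ob \<in> Reps" using assms by (simp add: Reps_def)
qed

lemma Min_inj: "inj_on Min Orbs"
proof (rule inj_onI)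
  fix a b assume "a \<in> Orbs" "b \<in> Orbs" "Min a = Min b"
  thus "a = b" using Orbs_Min(2)[of a] Orbs_Min(2)[of b] by metis
qed

lemma finite_P: "finite P" using finite_Hol by (auto intro: finite_PiE)

lemma sum_g:
  "(\<Sum>g\<in>P. CT (W_carrier d m) (wf d m \<sigma> g))
    = of_nat (card (Hol m)) ^ d * (\<Prod>i\<in>{1..d}. (CI_pow i (CI {0..<m} (Hol m))) ^ ncycles D \<sigma> i)"
proof -
  define f where "f Ob h = CI_pow (card Ob) (CT {0..<m} h)" for Ob :: "nat set" and h
  define R where "R i = CI_pow i (CI {0..<m} (Hol m))" for i
  define N where "N = card (Hol m)"
  have Npos: "N > 0" unfolding N_def using id_Hol[OF m] finite_Hol card_gt_0_iff by blast
  have "(\<Sum>g\<in>P. CT (W_carrier d m) (wf d m \<sigma> g))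
      = (\<Sum>g\<in>P. \<Prod>Ob\<in>Orbs. f Ob (walk g \<sigma> (Min Ob) (card Ob)))"
    using wsetup.CT_w_decomp[OF ws] by (simp add: f_def Orbs_def)
  also have "\<dots> = (\<Sum>g\<in>P. \<Prod>Ob\<in>Orbs. f Ob (\<Phi> g (Min Ob)))"
  proof (intro sum.cong[OF refl] prod.cong[OF refl])
    fix g Ob assume "Ob \<in> Orbs"
    thus "f Ob (walk g \<sigma> (Min Ob) (card Ob)) = f Ob (\<Phi> g (Min Ob))"
      using Orbs_Min[of Ob] by (simp add: \<Phi>_def)
  qed
  also have "\<dots> = (\<Sum>g\<in>\<Phi> ` P. \<Prod>Ob\<in>Orbs. f Ob (g (Min Ob)))"
    using sum.reindex[OF \<Phi>_inj, of "\<lambda>g. \<Prod>Ob\<in>Orbs. f Ob (g (Min Ob))"] by (simp add: comp_def)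
  also have "\<dots> = (\<Sum>g\<in>P. \<Prod>j\<in>Reps. f (orbit_of \<sigma> j) (g j))"
    unfolding \<Phi>_image
  proof (rule sum.cong[OF refl])
    fix g
    show "(\<Prod>Ob\<in>Orbs. f Ob (g (Min Ob))) = (\<Prod>j\<in>Reps. f (orbit_of \<sigma> j) (g j))"
      unfolding Reps_def using prod.reindex[OF Min_inj, of "\<lambda>j. f (orbit_of \<sigma> j) (g j)"] Orbs_Min(2)
      by (simp add: comp_def)
  qed
  also have "\<dots> = of_nat N ^ card (D - Reps) * (\<Prod>j\<in>Reps. \<Sum>h\<in>Hol m. f (orbit_of \<sigma> j) h)"
    unfolding N_def by (rule sum_PiE_reps[OF _ Reps_sub finite_Hol]) simp
  also have "(\<Prod>j\<in>Reps. \<Sum>h\<in>Hol m. f (orbit_of \<sigma> j) h) = (\<Prod>j\<in>Reps. of_nat N * R (card (orbit_of \<sigma> j)))"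
  proof (rule prod.cong[OF refl])
    fix j
    have "of_nat N * R (card (orbit_of \<sigma> j))
        = (const (1 / of_nat N) * of_nat N) * (\<Sum>h\<in>Hol m. f (orbit_of \<sigma> j) h)"
      by (simp add: R_def CI_def CI_pow_mult CI_pow_sum f_def N_def mult_ac)
    also have "\<dots> = (\<Sum>h\<in>Hol m. f (orbit_of \<sigma> j) h)" using const_inv_of_nat[OF Npos] by simp
    finally show "(\<Sum>h\<in>Hol m. f (orbit_of \<sigma> j) h) = of_nat N * R (card (orbit_of \<sigma> j))" by simp
  qed
  also have "\<dots> = of_nat N ^ card Reps * (\<Prod>j\<in>Reps. R (card (orbit_of \<sigma> j)))"
    by (simp add: prod.distrib)
  also have "(\<Prod>j\<in>Reps. R (card (orbit_of \<sigma> j))) = (\<Prod>Ob\<in>Orbs. R (card Ob))"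
    unfolding Reps_def using prod.reindex[OF Min_inj, of "\<lambda>j. R (card (orbit_of \<sigma> j))"] Orbs_Min(2)
    by (simp add: comp_def)
  also have "\<dots> = (\<Prod>i\<in>{1..d}. R i ^ ncycles D \<sigma> i)"
    unfolding Orbs_def using prod_orbits[OF sp, of R] by simp
  finally have "(\<Sum>g\<in>P. CT (W_carrier d m) (wf d m \<sigma> g))
      = of_nat N ^ (card (D - Reps) + card Reps) * (\<Prod>i\<in>{1..d}. R i ^ ncycles D \<sigma> i)"
    by (simp add: power_add mult_ac)
  moreover have "card (D - Reps) + card Reps = d"
    using card_Diff_subset[OF finite_subset[OF Reps_sub] Reps_sub] card_mono[OF _ Reps_sub] by simp
  ultimately show ?thesis by (simp add: N_def R_def)
qed

end



lemma W_image: "W d m = (\<lambda>(\<sigma>, g). wf d m \<sigma> g) ` (Sym d \<times> PiE {0..<d} (\<lambda>_. Hol m))"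
proof
  show "W d m \<subseteq> (\<lambda>(\<sigma>, g). wf d m \<sigma> g) ` (Sym d \<times> PiE {0..<d} (\<lambda>_. Hol m))"
  proof
    fix w assume "w \<in> W d m"
    then obtain \<sigma> g where w: "w = wf d m \<sigma> g" "\<sigma> \<in> Sym d" "\<forall>j<d. g j \<in> Hol m" by (auto simp: W_eq)
    have "wf d m \<sigma> g = wf d m \<sigma> (restrict g {0..<d})"
    proof
      fix p show "wf d m \<sigma> g p = wf d m \<sigma> (restrict g {0..<d}) p"
      proof (cases p)
        case (Pair x i)
        have "i < d \<Longrightarrow> \<sigma> i < d" using w(2) permutes_in_image by (fastforce simp: Sym_def)
        thus ?thesis using Pair by (auto simp: wf_def W_carrier_def)
      qed
    qed
    moreover have "restrict g {0..<d} \<in> PiE {0..<d} (\<lambda>_. Hol m)" using w(3) by auto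
    ultimately show "w \<in> (\<lambda>(\<sigma>, g). wf d m \<sigma> g) ` (Sym d \<times> PiE {0..<d} (\<lambda>_. Hol m))"
      using w(1,2) by force
  qed
  show "(\<lambda>(\<sigma>, g). wf d m \<sigma> g) ` (Sym d \<times> PiE {0..<d} (\<lambda>_. Hol m)) \<subseteq> W d m"
  proof
    fix w assume "w \<in> (\<lambda>(\<sigma>, g). wf d m \<sigma> g) ` (Sym d \<times> PiE {0..<d} (\<lambda>_. Hol m))"
    then obtain \<sigma> g where w: "w = wf d m \<sigma> g" "\<sigma> \<in> Sym d" "g \<in> PiE {0..<d} (\<lambda>_. Hol m)" by auto
    have "\<forall>j<d. g j \<in> Hol m" using w(3) by auto
    thus "w \<in> W d m" unfolding W_eq using w by blast
  qed
qed

lemma W_inj: assumes m: "m > 0"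
  shows "inj_on (\<lambda>(\<sigma>, g). wf d m \<sigma> g) (Sym d \<times> PiE {0..<d} (\<lambda>_. Hol m))"
proof (rule inj_onI)
  fix a b assume a: "a \<in> Sym d \<times> PiE {0..<d} (\<lambda>_. Hol m)" and b: "b \<in> Sym d \<times> PiE {0..<d} (\<lambda>_. Hol m)"
    and e: "(\<lambda>(\<sigma>, g). wf d m \<sigma> g) a = (\<lambda>(\<sigma>, g). wf d m \<sigma> g) b"
  obtain \<sigma> g where a': "a = (\<sigma>, g)" by (cases a)
  obtain \<sigma>' g' where b': "b = (\<sigma>', g')" by (cases b)
  have s: "\<sigma> permutes {0..<d}" "\<sigma>' permutes {0..<d}" using a b a' b' by (auto simp: Sym_def)
  have gP: "g \<in> PiE {0..<d} (\<lambda>_. Hol m)" "g' \<in> PiE {0..<d} (\<lambda>_. Hol m)" using a b a' b' by auto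
  have e': "wf d m \<sigma> g = wf d m \<sigma>' g'" using e a' b' by simp
  have app: "wf d m \<tau> h (x, i) = (h (\<tau> i) x, \<tau> i)" if "x < m" "i < d" for \<tau> h x i
    using that by (simp add: wf_def W_carrier_def)
  have ss: "\<sigma> = \<sigma>'"
  proof
    fix i show "\<sigma> i = \<sigma>' i"
    proof (cases "i < d")
      case True
      have "wf d m \<sigma> g (0, i) = wf d m \<sigma>' g' (0, i)" using e' by simp
      thus ?thesis using app[OF m True] by simp
    next
      case False thus ?thesis using permutes_not_in[OF s(1)] permutes_not_in[OF s(2)] by simp
    qed
  qed
  have gg: "g = g'"
  proof (rule PiE_ext[OF gP])
    fix j assume j: "j \<in> {0..<d}"
    have "j \<in> \<sigma> ` {0..<d}" using permutes_image[OF s(1)] j by simp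
    then obtain i where i: "i \<in> {0..<d}" "\<sigma> i = j" by blast
    have H: "g j \<in> Hol m" "g' j \<in> Hol m" using gP j by auto
    show "g j = g' j"
    proof
      fix x show "g j x = g' j x"
      proof (cases "x < m")
        case True
        have "wf d m \<sigma> g (x, i) = wf d m \<sigma>' g' (x, i)" using e' by simp
        thus ?thesis using app[OF True, of i] i ss by simp
      next
        case False
        thus ?thesis using permutes_not_in[OF Hol_permutes[OF H(1)]] permutes_not_in[OF Hol_permutes[OF H(2)]]
          by simp
      qed
    qed
  qed
  show "a = b" using a' b' ss gg by simp
qed

theorem part1:
  assumes d: "0 < d" and m: "0 < m"
  shows "CI (W_carrier d m) (W d m) = subst (CI {0..<d} (Sym d)) (\<lambda>j. CI_pow j (CI {0..<m} (Hol m)))"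
proof -
  define P where "P = PiE {0..<d} (\<lambda>_. Hol m)"
  define N where "N = card (Hol m)"
  define R where "R j = CI_pow j (CI {0..<m} (Hol m))" for j
  define T where "T \<sigma> = (\<Prod>i\<in>{1..d}. R i ^ ncycles {0..<d} \<sigma> i)" for \<sigma>
  have Npos: "N > 0" unfolding N_def using id_Hol[OF m] finite_Hol card_gt_0_iff by blast
  have finS: "finite (Sym d)" unfolding Sym_def by (rule finite_permutations) simp
  have cardS: "card (Sym d) = fact d" unfolding Sym_def by (rule card_permutations) auto
  have finP: "finite P" unfolding P_def using finite_Hol by (auto intro: finite_PiE)
  have cardP: "card P = N ^ d" unfolding P_def N_def by (simp add: card_PiE)
  have inj: "inj_on (\<lambda>(\<sigma>, g). wf d m \<sigma> g) (Sym d \<times> P)" unfolding P_def by (rule W_inj[OF m])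
  have WI: "W d m = (\<lambda>(\<sigma>, g). wf d m \<sigma> g) ` (Sym d \<times> P)" unfolding P_def by (rule W_image)
  have cardW: "card (W d m) = fact d * N ^ d"
    unfolding WI card_image[OF inj] card_cartesian_product cardS cardP ..
  have "(\<Sum>w\<in>W d m. CT (W_carrier d m) w) = (\<Sum>p\<in>Sym d \<times> P. CT (W_carrier d m) ((\<lambda>(\<sigma>, g). wf d m \<sigma> g) p))"
    unfolding WI by (rule sum.reindex[OF inj, unfolded comp_def])
  also have "\<dots> = (\<Sum>\<sigma>\<in>Sym d. \<Sum>g\<in>P. CT (W_carrier d m) (wf d m \<sigma> g))"
  proof -
    have "(\<Sum>p\<in>Sym d \<times> P. CT (W_carrier d m) ((\<lambda>(\<sigma>, g). wf d m \<sigma> g) p))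
        = (\<Sum>p\<in>Sym d \<times> P. (\<lambda>\<sigma> g. CT (W_carrier d m) (wf d m \<sigma> g)) (fst p) (snd p))"
      by (rule sum.cong[OF refl]) (auto split: prod.splits)
    also have "\<dots> = (\<Sum>\<sigma>\<in>Sym d. \<Sum>g\<in>P. CT (W_carrier d m) (wf d m \<sigma> g))"
      by (simp add: sum.cartesian_product')
    finally show ?thesis .
  qed
  also have "\<dots> = (\<Sum>\<sigma>\<in>Sym d. of_nat N ^ d * T \<sigma>)"
  proof (rule sum.cong[OF refl])
    fix \<sigma> assume "\<sigma> \<in> Sym d"
    hence "ssetup d m \<sigma>" using m by unfold_locales (simp_all add: Sym_def)
    show "(\<Sum>g\<in>P. CT (W_carrier d m) (wf d m \<sigma> g)) = of_nat N ^ d * T \<sigma>"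
      using ssetup.sum_g[OF \<open>ssetup d m \<sigma>\<close>] by (simp add: P_def N_def T_def R_def)
  qed
  finally have sumW: "(\<Sum>w\<in>W d m. CT (W_carrier d m) w) = of_nat N ^ d * (\<Sum>\<sigma>\<in>Sym d. T \<sigma>)"
    by (simp add: sum_distrib_left)
  have "CI (W_carrier d m) (W d m) = const (1 / (of_nat (fact d) * of_nat (N ^ d))) * (of_nat N ^ d * (\<Sum>\<sigma>\<in>Sym d. T \<sigma>))"
    unfolding CI_def sumW cardW by simp
  also have "\<dots> = const (1 / of_nat (fact d)) * (const (1 / of_nat (N ^ d)) * of_nat (N ^ d)) * (\<Sum>\<sigma>\<in>Sym d. T \<sigma>)"
    by (simp add: const_mult[symmetric] mult_ac)
  also have "\<dots> = const (1 / of_nat (fact d)) * (\<Sum>\<sigma>\<in>Sym d. T \<sigma>)"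
    using const_inv_of_nat[of "N ^ d"] Npos by simp
  also have "\<dots> = subst (CI {0..<d} (Sym d)) R"
    unfolding CI_def subst_mult subst_sum subst_const subst_CT cardS T_def by simp
  finally show ?thesis unfolding R_def .
qed



lemma mod_block: fixes j d m X :: nat assumes "j < d"
  shows "(j + d * X) mod (d * m) = j + d * (X mod m)"
proof (cases "m = 0")
  case True thus ?thesis by simp
next
  case False
  have e: "j + d * X = (j + d * (X mod m)) + (d * m) * (X div m)"
    by (metis add.assoc distrib_left mod_mult_div_eq mult.assoc)
  have lt: "j + d * (X mod m) < d * m"
  proof -
    have "X mod m \<le> m - 1" using False by (simp add: less_Suc_eq_le[symmetric])
    hence "d * (X mod m) \<le> d * (m - 1)" by simp
    moreover have "d * (m - 1) + d = d * m" using False by (simp add: algebra_simps)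
    ultimately show ?thesis using assms by linarith
  qed
  have "(j + d * X) mod (d * m) = ((j + d * (X mod m)) + (d * m) * (X div m)) mod (d * m)"
    by (subst e) (rule refl)
  also have "\<dots> = (j + d * (X mod m)) mod (d * m)" by (rule mod_mult_self2)
  also have "\<dots> = j + d * (X mod m)" using lt by (rule mod_less)
  finally show ?thesis .
qed

locale gsetup =
  fixes d :: nat and \<omega> :: "'a::{finite,field}" and n m :: nat
  assumes d: "d > 0" and dvd: "d dvd card (UNIV :: 'a set) - 1" and prim: "primitive_root \<omega>"
    and n_def: "n = card (UNIV :: 'a set) - 1" and m_def: "m = n div d"
begin
abbreviation "U \<equiv> (UNIV :: 'a set) - {0}"

lemma card_U: "card U = n"
  unfolding n_def by (simp add: card_Diff_singleton)

lemma n_pos: "n > 0"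
proof -
  have "{0, 1} \<subseteq> (UNIV :: 'a set)" by simp
  hence "card {0, 1::'a} \<le> card (UNIV :: 'a set)" by (rule card_mono[OF finite_UNIV])
  thus ?thesis unfolding n_def by simp
qed

lemma n_eq: "n = d * m" using dvd unfolding m_def n_def by simp

lemma m_pos: "m > 0" using n_pos n_eq by (cases "m = 0") auto

lemma \<omega>_nz: "\<omega> \<noteq> 0" using prim by (simp add: primitive_root_def)

lemma \<omega>_n: "\<omega> ^ n = 1"
proof -
  have inj: "inj_on (\<lambda>x. \<omega> * x) U" using \<omega>_nz by (auto intro: inj_onI)
  have img: "(\<lambda>x. \<omega> * x) ` U = U"
  proof
    show "(\<lambda>x. \<omega> * x) ` U \<subseteq> U" using \<omega>_nz by auto
    show "U \<subseteq> (\<lambda>x. \<omega> * x) ` U"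
    proof
      fix y assume y: "y \<in> U"
      have "y = \<omega> * (y / \<omega>)" using \<omega>_nz by simp
      moreover have "y / \<omega> \<in> U" using y \<omega>_nz by simp
      ultimately show "y \<in> (\<lambda>x. \<omega> * x) ` U" by blast
    qed
  qed
  have "(\<Prod>x\<in>U. x) = (\<Prod>x\<in>(\<lambda>x. \<omega> * x) ` U. x)" using img by simp
  also have "\<dots> = (\<Prod>x\<in>U. \<omega> * x)" using prod.reindex[OF inj, of "\<lambda>x. x"] by (simp add: comp_def)
  also have "\<dots> = \<omega> ^ n * (\<Prod>x\<in>U. x)" by (simp add: prod.distrib card_U)
  finally have "1 * (\<Prod>x\<in>U. x) = \<omega> ^ n * (\<Prod>x\<in>U. x)" by simp
  moreover have "(\<Prod>x\<in>U. x) \<noteq> 0" by (simp add: prod_zero_iff)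
  ultimately show ?thesis by (metis mult_cancel_right)
qed

lemma pow_mod: "\<omega> ^ e = \<omega> ^ (e mod n)"
proof -
  have "\<omega> ^ e = \<omega> ^ (e mod n + n * (e div n))" by simp
  also have "\<dots> = \<omega> ^ (e mod n)" by (simp only: power_add power_mult \<omega>_n power_one mult_1_right)
  finally show ?thesis .
qed

lemma pow_image: "(\<lambda>k. \<omega> ^ k) ` {0..<n} = U"
proof
  show "(\<lambda>k. \<omega> ^ k) ` {0..<n} \<subseteq> U" using \<omega>_nz by auto
  show "U \<subseteq> (\<lambda>k. \<omega> ^ k) ` {0..<n}"
  proof
    fix y assume "y \<in> U"
    then obtain k :: nat where "y = \<omega> ^ k" using prim by (auto simp: primitive_root_def)
    hence "y = \<omega> ^ (k mod n)" using pow_mod by simp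
    moreover have "k mod n \<in> {0..<n}" using n_pos by simp
    ultimately show "y \<in> (\<lambda>k. \<omega> ^ k) ` {0..<n}" by blast
  qed
qed

lemma pow_inj: "inj_on (\<lambda>k. \<omega> ^ k) {0..<n}"
  by (rule eq_card_imp_inj_on) (simp_all add: pow_image card_U)

lemma pow_eq_iff: "\<omega> ^ a = \<omega> ^ b \<longleftrightarrow> a mod n = b mod n"
proof
  assume "\<omega> ^ a = \<omega> ^ b"
  hence "\<omega> ^ (a mod n) = \<omega> ^ (b mod n)" using pow_mod[of a] pow_mod[of b] by simp
  thus "a mod n = b mod n" using inj_onD[OF pow_inj] n_pos by simp
next
  assume "a mod n = b mod n"
  thus "\<omega> ^ a = \<omega> ^ b" using pow_mod[of a] pow_mod[of b] by simp
qed

definition \<phi> :: "nat \<times> nat \<Rightarrow> 'a" where "\<phi> p = \<omega> ^ (snd p + d * fst p)"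

abbreviation "C \<equiv> W_carrier d m"

lemma phi_eq: assumes "i < d" shows "\<omega> ^ (i + d * X) = \<phi> (X mod m, i)"
proof -
  have "\<omega> ^ (i + d * X) = \<omega> ^ ((i + d * X) mod n)" by (rule pow_mod)
  also have "(i + d * X) mod n = i + d * (X mod m)" unfolding n_eq by (rule mod_block[OF assms])
  finally show ?thesis by (simp add: \<phi>_def)
qed

lemma phi_gen: "\<omega> ^ e = \<phi> ((e div d) mod m, e mod d)"
proof -
  have "e = e mod d + d * (e div d)" by simp
  hence "\<omega> ^ e = \<omega> ^ (e mod d + d * (e div d))" by (rule arg_cong)
  also have "\<dots> = \<phi> ((e div d) mod m, e mod d)" by (rule phi_eq) (use d in simp)
  finally show ?thesis .
qed

lemma phi_bij: "bij_betw \<phi> C U"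
proof -
  have lt: "snd p + d * fst p < n" if "p \<in> C" for p
  proof -
    obtain k i where p: "p = (k, i)" "k < m" "i < d" using \<open>p \<in> C\<close> by (cases p) (auto simp: W_carrier_def)
    have "i + d * k < d + d * k" using p by simp
    also have "d + d * k = d * Suc k" by simp
    also have "\<dots> \<le> d * m" using p by (intro mult_le_mono2) simp
    finally show ?thesis using p n_eq by simp
  qed
  have inj: "inj_on \<phi> C"
  proof (rule inj_onI)
    fix p q assume pq: "p \<in> C" "q \<in> C" "\<phi> p = \<phi> q"
    have "snd p + d * fst p = snd q + d * fst q"
      using inj_onD[OF pow_inj, of "snd p + d * fst p" "snd q + d * fst q"] pq lt by (simp add: \<phi>_def)
    moreover have "snd p < d" "snd q < d" using pq by (auto simp: W_carrier_def)
    ultimately have "snd p = snd q" "fst p = fst q"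
      using d by (metis add.commute mod_mult_self2 mod_less, metis add_left_cancel mod_mult_self2 mod_less mult_left_cancel not_gr0 add.commute)
    thus "p = q" by (simp add: prod_eq_iff)
  qed
  have "\<phi> ` C = U"
  proof
    show "\<phi> ` C \<subseteq> U" using \<omega>_nz by (auto simp: \<phi>_def)
    show "U \<subseteq> \<phi> ` C"
    proof
      fix y assume "y \<in> U"
      then obtain k :: nat where "y = \<omega> ^ k" using prim by (auto simp: primitive_root_def)
      hence "y = \<phi> ((k div d) mod m, k mod d)" using phi_gen by simp
      moreover have "((k div d) mod m, k mod d) \<in> C" using d m_pos by (simp add: W_carrier_def)
      ultimately show "y \<in> \<phi> ` C" by blast
    qed
  qed
  thus ?thesis using inj by (simp add: bij_betw_def)
qed

end


lemma affine_mod: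
  fixes a a' t t' b b' m :: nat
  assumes "a mod m = a' mod m" "t mod m = t' mod m" "b mod m = b' mod m"
  shows "(a * t + b) mod m = (a' * t' + b') mod m"
  by (rule mod_add_cong[OF mod_mult_cong[OF assms(1,2)] assms(3)])

context gsetup
begin

definition "\<phi>inv = inv_into C \<phi>"

lemma phi_inv1: "p \<in> C \<Longrightarrow> \<phi>inv (\<phi> p) = p"
  unfolding \<phi>inv_def using phi_bij by (simp add: bij_betw_def inv_into_f_f)

lemma phi_inv2: assumes "y \<in> U" shows "\<phi>inv y \<in> C" "\<phi> (\<phi>inv y) = y"
  unfolding \<phi>inv_def using phi_bij assms by (auto simp: bij_betw_def inv_into_into f_inv_into_f)

lemma phi_U: "p \<in> C \<Longrightarrow> \<phi> p \<in> U"
  using phi_bij by (auto simp: bij_betw_def)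

lemma phi_inj: "inj_on \<phi> C" using phi_bij by (simp add: bij_betw_def)

definition \<Psi> :: "(nat \<times> nat \<Rightarrow> nat \<times> nat) \<Rightarrow> 'a \<Rightarrow> 'a" where
  "\<Psi> w = (\<lambda>y. if y = 0 then 0 else \<phi> (w (\<phi>inv y)))"

lemma W_perm: assumes "w \<in> W d m" shows "w permutes C"
proof -
  obtain \<sigma> g where w: "w = wf d m \<sigma> g" "\<sigma> \<in> Sym d" "\<forall>j<d. g j \<in> Hol m" using assms by (auto simp: W_eq)
  interpret wsetup d m \<sigma> g using w m_pos by unfold_locales (auto simp: Sym_def)
  show ?thesis using w_perm w(1) by simp
qed

lemma Psi_conj: assumes "w \<in> W d m" "p \<in> C" shows "\<Psi> w (\<phi> p) = \<phi> (w p)"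
  using phi_U[OF assms(2)] phi_inv1[OF assms(2)] by (auto simp: \<Psi>_def)

lemma Psi_inj: "inj_on \<Psi> (W d m)"
proof (rule inj_onI)
  fix w w' assume w: "w \<in> W d m" and w': "w' \<in> W d m" and e: "\<Psi> w = \<Psi> w'"
  show "w = w'"
  proof
    fix p show "w p = w' p"
    proof (cases "p \<in> C")
      case True
      have "\<phi> (w p) = \<phi> (w' p)" using Psi_conj[OF w True] Psi_conj[OF w' True] e by simp
      moreover have "w p \<in> C" "w' p \<in> C" using permutes_in_image[OF W_perm[OF w]] permutes_in_image[OF W_perm[OF w']] True by auto
      ultimately show ?thesis using inj_onD[OF phi_inj] by blast
    next
      case False thus ?thesis using permutes_not_in[OF W_perm[OF w]] permutes_not_in[OF W_perm[OF w']] by simp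
    qed
  qed
qed

lemma CT_Psi: assumes "w \<in> W d m" shows "CT U (\<Psi> w) = CT C w"
proof (rule CT_conj[OF _ phi_bij])
  show "perm_on C w" by (rule perm_on_permutes[OF _ W_perm[OF assms]]) (simp add: W_carrier_def)
  show "\<And>x. x \<in> C \<Longrightarrow> \<phi> (w x) = \<Psi> w (\<phi> x)" using Psi_conj[OF assms] by simp
qed

lemma Psi_bij: assumes "w \<in> W d m" shows "bij (\<Psi> w)"
proof -
  have wp: "w permutes C" by (rule W_perm[OF assms])
  have nz: "\<Psi> w y \<noteq> 0" if "y \<noteq> 0" for y
  proof -
    have "\<phi>inv y \<in> C" using phi_inv2 that by simp
    hence "w (\<phi>inv y) \<in> C" using permutes_in_image[OF wp] by simp
    thus ?thesis using phi_U that by (simp add: \<Psi>_def)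
  qed
  have "inj (\<Psi> w)"
  proof (rule injI)
    fix x y assume e: "\<Psi> w x = \<Psi> w y"
    show "x = y"
    proof (cases "x = 0 \<or> y = 0")
      case True
      have z: "\<Psi> w 0 = 0" by (simp add: \<Psi>_def)
      show ?thesis
      proof (rule ccontr)
        assume "x \<noteq> y"
        hence "(x = 0 \<and> y \<noteq> 0) \<or> (y = 0 \<and> x \<noteq> 0)" using True by blast
        thus False using nz[of x] nz[of y] e z by auto
      qed
    next
      case False
      hence xy: "x \<in> U" "y \<in> U" by auto
      have "\<phi> (w (\<phi>inv x)) = \<phi> (w (\<phi>inv y))" using e False by (simp add: \<Psi>_def)
      moreover have "w (\<phi>inv x) \<in> C" "w (\<phi>inv y) \<in> C" using phi_inv2 xy permutes_in_image[OF wp] by auto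
      ultimately have "w (\<phi>inv x) = w (\<phi>inv y)" using inj_onD[OF phi_inj] by blast
      hence "\<phi>inv x = \<phi>inv y" using permutes_inj[OF wp] by (auto dest: injD)
      hence "\<phi> (\<phi>inv x) = \<phi> (\<phi>inv y)" by simp
      thus ?thesis using phi_inv2(2)[OF xy(1)] phi_inv2(2)[OF xy(2)] by simp
    qed
  qed
  moreover have "surj (\<Psi> w)" using finite_UNIV_inj_surj[OF finite_UNIV calculation] .
  ultimately show ?thesis by (rule bijI)
qed

lemma pow_split: "\<omega> ^ i * (\<omega> ^ t) ^ d = \<omega> ^ (i + d * t)"
proof -
  have "(\<omega> ^ t) ^ d = \<omega> ^ (d * t)" by (simp add: power_mult[symmetric] mult.commute)
  thus ?thesis by (simp add: power_add)
qed

lemma Psi_in: assumes w: "w \<in> W d m" shows "\<Psi> w \<in> GCP d \<omega>"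
proof -
  obtain \<sigma> g where ws: "w = wf d m \<sigma> g" "\<sigma> \<in> Sym d" "\<forall>j<d. g j \<in> Hol m" using w by (auto simp: W_eq)
  have "\<forall>j. \<exists>AB. j < d \<longrightarrow> (g j = hol_map m (fst AB) (snd AB) \<and> fst AB < m \<and> snd AB < m)"
  proof
    fix j show "\<exists>AB. j < d \<longrightarrow> (g j = hol_map m (fst AB) (snd AB) \<and> fst AB < m \<and> snd AB < m)"
    proof (cases "j < d")
      case True
      hence "g j \<in> Hol m" using ws(3) by blast
      then obtain a b where "g j = hol_map m a b" "a < m" "b < m" unfolding Hol_def by blast
      thus ?thesis by (intro exI[of _ "(a, b)"]) simp
    qed simp
  qed
  then obtain AB where AB: "\<And>j. j < d \<Longrightarrow> g j = hol_map m (fst (AB j)) (snd (AB j)) \<and> fst (AB j) < m \<and> snd (AB j) < m"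
    by metis
  define A where "A j = fst (AB j)" for j
  define B where "B j = snd (AB j)" for j
  define r where "r i = (if A (\<sigma> i) = 0 then m else A (\<sigma> i))" for i
  define a where "a i = \<omega> ^ (\<sigma> i + d * B (\<sigma> i)) / \<omega> ^ (r i * i)" for i
  have \<sigma>d: "\<sigma> i < d" if "i < d" for i using ws(2) permutes_in_image that by (fastforce simp: Sym_def)
  have rm: "r i mod m = A (\<sigma> i) mod m" for i by (simp add: r_def)
  have r_range: "r i \<in> {1..(card (UNIV :: 'a set) - 1) div d}" if "i < d" for i
    using AB[OF \<sigma>d[OF that]] m_pos by (auto simp: r_def A_def m_def n_def)
  have main: "\<Psi> w (\<omega> ^ i * c) = a i * (\<omega> ^ i * c) ^ r i" if i: "i < d" and c: "c \<in> index_subgroup d" for i c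
  proof -
    obtain y where y: "c = y ^ d" "y \<noteq> 0" using c by (auto simp: index_subgroup_def)
    obtain t :: nat where t: "y = \<omega> ^ t" using y(2) prim by (auto simp: primitive_root_def)
    have e1: "\<omega> ^ i * c = \<phi> (t mod m, i)" using pow_split[of i t] phi_eq[OF i] t y(1) by simp
    have tC: "(t mod m, i) \<in> C" using i m_pos by (simp add: W_carrier_def)
    have "\<Psi> w (\<omega> ^ i * c) = \<phi> (w (t mod m, i))" using e1 Psi_conj[OF w tC] by simp
    also have "w (t mod m, i) = (g (\<sigma> i) (t mod m), \<sigma> i)" using i m_pos ws(1) by (simp add: wf_def W_carrier_def)
    also have "g (\<sigma> i) (t mod m) = (A (\<sigma> i) * (t mod m) + B (\<sigma> i)) mod m"
      using AB[OF \<sigma>d[OF i]] m_pos by (simp add: hol_map_def A_def B_def)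
    also have "\<dots> = (B (\<sigma> i) + t * r i) mod m"
      using affine_mod[of "A (\<sigma> i)" m "r i" "t mod m" t "B (\<sigma> i)" "B (\<sigma> i)"] rm
      by (simp add: mult.commute add.commute)
    also have "\<phi> ((B (\<sigma> i) + t * r i) mod m, \<sigma> i) = \<omega> ^ (\<sigma> i + d * (B (\<sigma> i) + t * r i))"
      using phi_eq[OF \<sigma>d[OF i]] by simp
    also have "\<dots> = a i * (\<omega> ^ i * c) ^ r i"
    proof -
      have "(\<omega> ^ i * c) ^ r i = (\<omega> ^ (i + d * t)) ^ r i" using pow_split[of i t] t y(1) by simp
      also have "\<dots> = \<omega> ^ (r i * i + d * (t * r i))" by (simp add: power_mult[symmetric] algebra_simps)
      also have "\<dots> = \<omega> ^ (r i * i) * \<omega> ^ (d * (t * r i))" by (rule power_add)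
      finally have e2: "(\<omega> ^ i * c) ^ r i = \<omega> ^ (r i * i) * \<omega> ^ (d * (t * r i))" .
      have nz: "\<omega> ^ (r i * i) \<noteq> 0" using \<omega>_nz by simp
      have "a i * (\<omega> ^ i * c) ^ r i = \<omega> ^ (\<sigma> i + d * B (\<sigma> i)) * \<omega> ^ (d * (t * r i))"
        unfolding e2 a_def using nz by (simp add: field_simps)
      also have "\<dots> = \<omega> ^ (\<sigma> i + d * (B (\<sigma> i) + t * r i))" by (simp add: power_add distrib_left add.assoc)
      finally show ?thesis by simp
    qed
    finally show ?thesis .
  qed
  have "\<Psi> w 0 = 0" by (simp add: \<Psi>_def)
  thus ?thesis unfolding GCP_def using Psi_bij[OF w] r_range main by blast
qed

end


lemma hol_inj_coprime:
  assumes m: "m > 0" and inj: "inj_on (hol_map m A B) {0..<m}"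
  shows "coprime A m"
proof (rule ccontr)
  assume nc: "\<not> coprime A m"
  define c where "c = gcd A m"
  have c1: "c \<noteq> 1" using nc by (simp add: c_def coprime_iff_gcd_eq_1)
  have cpos: "c > 0" using m by (simp add: c_def)
  have c2: "c \<ge> 2" using c1 cpos by simp
  obtain x where x: "m = c * x" unfolding c_def by (metis gcd_dvd2 dvdE)
  obtain A' where A': "A = c * A'" unfolding c_def by (metis gcd_dvd1 dvdE)
  have xpos: "x > 0" using x m by (cases "x = 0") auto
  have xlt: "x < m" using x c2 xpos by simp
  have "A * x = A' * m" using A' x by (simp add: mult_ac)
  hence "hol_map m A B x = hol_map m A B 0" using xlt m by (simp add: hol_map_def)
  hence "x = 0" using inj_onD[OF inj] xlt m by simp
  thus False using xpos by simp
qed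

context gsetup
begin

lemma Psi_surj: assumes f: "f \<in> GCP d \<omega>" shows "\<exists>w\<in>W d m. \<Psi> w = f"
proof -
  obtain a r where fb: "bij f" and f0: "f 0 = 0"
    and rr: "\<And>i. i < d \<Longrightarrow> r i \<in> {1..(card (UNIV :: 'a set) - 1) div d}"
    and fa: "\<And>i c. i < d \<Longrightarrow> c \<in> index_subgroup d \<Longrightarrow> f (\<omega> ^ i * c) = a i * (\<omega> ^ i * c) ^ r i"
    using f unfolding GCP_def by blast
  have finj: "inj f" using fb bij_is_inj by blast
  have KF0: "f (\<omega> ^ (i + d * t)) = a i * (\<omega> ^ (i + d * t)) ^ r i" if i: "i < d" for i t
  proof -
    have "(\<omega> ^ t) ^ d \<in> index_subgroup d" using \<omega>_nz by (auto simp: index_subgroup_def)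
    from fa[OF i this] show ?thesis by (simp add: pow_split)
  qed
  have anz: "a i \<noteq> 0" if i: "i < d" for i
  proof
    assume "a i = 0"
    hence "f (\<omega> ^ (i + d * 0)) = 0" using KF0[OF i, of 0] by simp
    hence "f (\<omega> ^ i) = f 0" using f0 by simp
    hence "\<omega> ^ i = 0" using injD[OF finj] by blast
    thus False using \<omega>_nz by simp
  qed
  have "\<forall>i. \<exists>k. i < d \<longrightarrow> a i = \<omega> ^ k"
    using anz prim by (auto simp: primitive_root_def)
  then obtain \<alpha> where \<alpha>: "\<And>i. i < d \<Longrightarrow> a i = \<omega> ^ \<alpha> i" by metis
  define e where "e i = \<alpha> i + r i * i" for i
  define \<sigma> where "\<sigma> i = (if i < d then e i mod d else i)" for i
  define G where "G i = hol_map m (r i mod m) ((e i div d) mod m)" for i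
  have KF1: "f (\<omega> ^ (i + d * t)) = \<phi> ((e i div d + t * r i) mod m, e i mod d)" if i: "i < d" for i t
  proof -
    have "f (\<omega> ^ (i + d * t)) = \<omega> ^ \<alpha> i * \<omega> ^ ((i + d * t) * r i)"
      using KF0[OF i, of t] \<alpha>[OF i] by (simp add: power_mult)
    also have "\<dots> = \<omega> ^ (e i + d * (t * r i))" by (simp add: e_def power_add[symmetric] algebra_simps)
    also have "e i + d * (t * r i) = e i mod d + d * (e i div d + t * r i)" by (simp add: algebra_simps)
    also have "\<omega> ^ \<dots> = \<phi> ((e i div d + t * r i) mod m, e i mod d)" by (rule phi_eq) (use d in simp)
    finally show ?thesis .
  qed
  have KF2: "G i t = (e i div d + t * r i) mod m" if "t < m" for i t
  proof -
    have "G i t = ((r i mod m) * t + (e i div d) mod m) mod m" using that by (simp add: G_def hol_map_def)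
    also have "\<dots> = (r i * t + e i div d) mod m" by (rule affine_mod) simp_all
    finally show ?thesis by (simp add: add.commute mult.commute)
  qed
  have KF: "f (\<phi> (t, i)) = \<phi> (G i t, \<sigma> i)" if "t < m" "i < d" for t i
    using KF1[OF that(2), of t] KF2[OF that(1), of i] that by (simp add: \<phi>_def \<sigma>_def)
  have Glt: "G i t < m" if "t < m" for i t using m_pos that by (simp add: G_def hol_map_def)
  have \<sigma>inj: "inj_on \<sigma> {0..<d}"
  proof (rule inj_onI, rule ccontr)
    fix i i' assume ii: "i \<in> {0..<d}" "i' \<in> {0..<d}" "\<sigma> i = \<sigma> i'" "i \<noteq> i'"
    let ?S = "\<phi> ` ({0..<m} \<times> {i, i'})"
    let ?T = "\<phi> ` ({0..<m} \<times> {\<sigma> i})"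
    have sub: "{0..<m} \<times> {i, i'} \<subseteq> C" using ii by (auto simp: W_carrier_def)
    have "card ?S = card ({0..<m} \<times> {i, i'})" by (rule card_image[OF inj_on_subset[OF phi_inj sub]])
    also have "\<dots> = 2 * m" using ii(4) by (simp add: card_cartesian_product)
    finally have cS: "card ?S = 2 * m" .
    have "f ` ?S \<subseteq> ?T"
    proof
      fix z assume "z \<in> f ` ?S"
      then obtain p where p: "p \<in> {0..<m} \<times> {i, i'}" "z = f (\<phi> p)" by blast
      then obtain t j where tj: "t < m" "j \<in> {i, i'}" "z = f (\<phi> (t, j))" by (cases p) auto
      have jd: "j < d" using tj(2) ii by auto
      have "\<sigma> j = \<sigma> i" using tj(2) ii(3) by auto
      hence "z = \<phi> (G j t, \<sigma> i)" using KF[OF tj(1) jd] tj(3) by simp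
      thus "z \<in> ?T" using Glt[OF tj(1)] by auto
    qed
    moreover have "finite ?T" by simp
    ultimately have "card (f ` ?S) \<le> card ?T" using card_mono by blast
    also have "card ?T \<le> card ({0..<m} \<times> {\<sigma> i})" by (rule card_image_le) simp
    also have "\<dots> = m" by (simp add: card_cartesian_product)
    finally have "card (f ` ?S) \<le> m" .
    moreover have "card (f ` ?S) = card ?S" by (rule card_image[OF inj_on_subset[OF finj]]) simp
    ultimately show False using cS m_pos by simp
  qed
  have \<sigma>perm: "\<sigma> permutes {0..<d}"
  proof (rule bij_imp_permutes)
    have "\<sigma> ` {0..<d} \<subseteq> {0..<d}" using d by (auto simp: \<sigma>_def)
    hence "\<sigma> ` {0..<d} = {0..<d}" using endo_inj_surj[OF _ _ \<sigma>inj] by simp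
    thus "bij_betw \<sigma> {0..<d} {0..<d}" using \<sigma>inj by (simp add: bij_betw_def)
    show "\<And>x. x \<notin> {0..<d} \<Longrightarrow> \<sigma> x = x" by (simp add: \<sigma>_def)
  qed
  have GH: "G i \<in> Hol m" if i: "i < d" for i
  proof -
    have "inj_on (G i) {0..<m}"
    proof (rule inj_onI)
      fix t t' assume tt: "t \<in> {0..<m}" "t' \<in> {0..<m}" "G i t = G i t'"
      have "f (\<phi> (t, i)) = f (\<phi> (t', i))" using KF[of t i] KF[of t' i] tt i by simp
      hence "\<phi> (t, i) = \<phi> (t', i)" using injD[OF finj] by blast
      moreover have "(t, i) \<in> C" "(t', i) \<in> C" using tt i by (auto simp: W_carrier_def)
      ultimately have "(t, i) = (t', i)" using inj_onD[OF phi_inj] by blast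
      thus "t = t'" by simp
    qed
    hence "coprime (r i mod m) m" unfolding G_def by (rule hol_inj_coprime[OF m_pos])
    moreover have "r i mod m < m" "(e i div d) mod m < m" using m_pos by auto
    ultimately show ?thesis unfolding Hol_def G_def by blast
  qed
  define g' where "g' j = G (inv_into {0..<d} \<sigma> j)" for j
  define w where "w = wf d m \<sigma> g'"
  have g'H: "\<forall>j<d. g' j \<in> Hol m"
  proof (intro allI impI)
    fix j assume j: "j < d"
    have "j \<in> \<sigma> ` {0..<d}" using permutes_image[OF \<sigma>perm] j by simp
    hence "inv_into {0..<d} \<sigma> j \<in> {0..<d}" by (rule inv_into_into)
    thus "g' j \<in> Hol m" using GH by (simp add: g'_def)
  qed
  have wW: "w \<in> W d m" unfolding W_eq w_def using \<sigma>perm g'H by (auto simp: Sym_def)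
  have "\<Psi> w = f"
  proof
    fix y show "\<Psi> w y = f y"
    proof (cases "y = 0")
      case True thus ?thesis using f0 by (simp add: \<Psi>_def)
    next
      case False
      hence yU: "y \<in> U" by simp
      obtain t i where p: "\<phi>inv y = (t, i)" by (cases "\<phi>inv y")
      have tC: "(t, i) \<in> C" using phi_inv2(1)[OF yU] p by simp
      hence ti: "t < m" "i < d" by (auto simp: W_carrier_def)
      have y: "y = \<phi> (t, i)" using phi_inv2(2)[OF yU] p by simp
      have "\<Psi> w y = \<phi> (w (t, i))" using y Psi_conj[OF wW tC] by simp
      also have "w (t, i) = (g' (\<sigma> i) t, \<sigma> i)" using ti by (simp add: w_def wf_def W_carrier_def)
      also have "g' (\<sigma> i) = G i" using inv_into_f_f[OF \<sigma>inj] ti by (simp add: g'_def)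
      also have "\<phi> (G i t, \<sigma> i) = f y" using KF[OF ti] y by simp
      finally show ?thesis .
    qed
  qed
  thus ?thesis using wW by blast
qed

end


context gsetup
begin

lemma GCP_image: "GCP d \<omega> = \<Psi> ` W d m"
proof
  show "GCP d \<omega> \<subseteq> \<Psi> ` W d m" using Psi_surj by blast
  show "\<Psi> ` W d m \<subseteq> GCP d \<omega>" using Psi_in by blast
qed

lemma CI_GCP: "CI U (GCP d \<omega>) = CI (W_carrier d m) (W d m)"
proof -
  have "card (GCP d \<omega>) = card (W d m)" unfolding GCP_image by (rule card_image[OF Psi_inj])
  moreover have "(\<Sum>f\<in>GCP d \<omega>. CT U f) = (\<Sum>w\<in>W d m. CT (W_carrier d m) w)"
  proof -
    have "(\<Sum>f\<in>GCP d \<omega>. CT U f) = (\<Sum>w\<in>W d m. CT U (\<Psi> w))"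
      unfolding GCP_image by (rule sum.reindex[OF Psi_inj, unfolded comp_def])
    also have "\<dots> = (\<Sum>w\<in>W d m. CT (W_carrier d m) w)" by (rule sum.cong[OF refl]) (rule CT_Psi)
    finally show ?thesis .
  qed
  ultimately show ?thesis by (simp add: CI_def)
qed

end

theorem proposition6p2:
  fixes d m :: nat and \<omega> :: "'a::{finite,field}"
  assumes "0 < d" and "0 < m"
  shows "CI (W_carrier d m) (W d m) = subst (CI {0..<d} (Sym d)) (\<lambda>j. CI_pow j (CI {0..<m} (Hol m)))
    \<and> ((d dvd card (UNIV :: 'a set) - 1 \<and> primitive_root \<omega>) \<longrightarrow>
         CI (UNIV - {0}) (GCP d \<omega>) =
         subst (CI {0..<d} (Sym d)) (\<lambda>j. CI_pow j (CI {0..<(card (UNIV :: 'a set) - 1) div d} (Hol ((card (UNIV :: 'a set) - 1) div d)))))"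
proof (intro conjI impI)
  show "CI (W_carrier d m) (W d m) = subst (CI {0..<d} (Sym d)) (\<lambda>j. CI_pow j (CI {0..<m} (Hol m)))"
    by (rule part1[OF assms])
next
  assume h: "d dvd card (UNIV :: 'a set) - 1 \<and> primitive_root \<omega>"
  define n where "n = card (UNIV :: 'a set) - 1"
  define m' where "m' = n div d"
  interpret gsetup d \<omega> n m'
    using assms(1) h by unfold_locales (simp_all add: n_def m'_def)
  show "CI (UNIV - {0}) (GCP d \<omega>) =
         subst (CI {0..<d} (Sym d)) (\<lambda>j. CI_pow j (CI {0..<(card (UNIV :: 'a set) - 1) div d} (Hol ((card (UNIV :: 'a set) - 1) div d))))"
    using CI_GCP part1[OF assms(1) m_pos] by (simp add: n_def m'_def)
qed


end
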